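(* Let $\lambda$ be a dominant weight and let $\Gamma=(\beta_i)_{i\in I}$ be a $\lambda$-chain indexed by a totally ordered set $I=\{\overline{1}<\cdots<\overline{t}<1<2<\cdots<q<\overline{t+1}<\cdots<\overline{n}\}$. Assume that $\{\beta_1,\ldots,\beta_q\}$ is exactly the set of positive roots (without repetition) of a rank $2$ root subsystem $\overline{\Phi}\subseteq\Phi$. For $i\in I$ let $l_i:=|\{j\in I: j<i,\ \beta_j=\beta_i\}|$. Then the intersection of affine hyperplanes $\bigcap_{i=1}^q H_{\beta_i,-l_i}$ has codimension $2$ in $V$, and it coincides with $H_{\beta_1,-l_1}\cap H_{\beta_q,-l_q}$.
   Context: $\Phi$ is an irreducible (finite, crystallographic) root system of a complex simple Lie algebra, with positive roots $\Phi^+$, simple roots $\alpha_1,\dots,\alpha_r$ and $W$-invariant inner product $\langle\cdot,\cdot\rangle$ on the real span $V$ of $\Phi$; for $\alpha\in\Phi$, $\alpha^\vee:=2\alpha/\langle\alpha,\alpha\rangle$. A weight $\lambda$ is dominant if $\langle\lambda,\alpha^\vee\rangle\in\mathbb{Z}_{\ge0}$ for all $\alpha\in\Phi^+$. For $\alpha\in\Phi$, $k\in\mathbb{Z}$, let $H_{\alpha,k}=\{\mu\in V:\langle\mu,\alpha^\vee\rangle=k\}$. Alcoves are the connected components of $V\setminus\bigcup_{\alpha,k}H_{\alpha,k}$; the fundamental alcove is $A_\circ=\{\mu:0<\langle\mu,\alpha^\vee\rangle<1\ \forall\alpha\in\Phi^+\}$ and $A_{-\lambda}:=A_\circ-\lambda$.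 Two distinct alcoves $A,B$ are adjacent if they share a wall; we write $A\xrightarrow{\beta}B$ if the common wall lies in some $H_{\beta,k}$ and $\beta$ points from $A$ to $B$. A sequence of roots $(\beta_1,\dots,\beta_m)$ (here indexed by the ordered set $I$) is a $\lambda$-chain if $A_\circ=A_0\xrightarrow{-\beta_1}A_1\xrightarrow{-\beta_2}\cdots\xrightarrow{-\beta_m}A_m=A_{-\lambda}$ is an alcove path of minimal possible length between $A_\circ$ and $A_{-\lambda}$; its entries are positive roots. A rank $2$ root subsystem is a subset $\overline{\Phi}\subseteq\Phi$ which is itself a root system of rank $2$; its positive roots are $\overline{\Phi}^+=\overline{\Phi}\cap\Phi^+$. *)

theory Defs
  imports "HOL-Analysis.Analysis"
begin

definition coroot :: "'a::euclidean_space \<Rightarrow> 'a" where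
  "coroot \<alpha> = (2 / (\<alpha> \<bullet> \<alpha>)) *\<^sub>R \<alpha>"

definition refl :: "'a::euclidean_space \<Rightarrow> 'a \<Rightarrow> 'a" where
  "refl \<alpha> \<mu> = \<mu> - (\<mu> \<bullet> coroot \<alpha>) *\<^sub>R \<alpha>"

definition root_system :: "'a::euclidean_space set \<Rightarrow> bool" where
  "root_system R \<longleftrightarrow> finite R \<and> 0 \<notin> R \<and>
     (\<forall>\<alpha>\<in>R. \<forall>\<beta>\<in>R. refl \<alpha> \<beta> \<in> R) \<and>
     (\<forall>\<alpha>\<in>R. \<forall>\<beta>\<in>R. \<beta> \<bullet> coroot \<alpha> \<in> \<int>) \<and>
     (\<forall>\<alpha>\<in>R. \<forall>c::real. c *\<^sub>R \<alpha> \<in> R \<longrightarrow> c = 1 \<or> c = -1)"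

definition rank :: "'a::euclidean_space set \<Rightarrow> nat" where
  "rank R = dim (span R)"

definition irreducible_rs :: "'a::euclidean_space set \<Rightarrow> bool" where
  "irreducible_rs R \<longleftrightarrow> R \<noteq> {} \<and>
     \<not> (\<exists>R1 R2. R1 \<noteq> {} \<and> R2 \<noteq> {} \<and> R1 \<union> R2 = R \<and> R1 \<inter> R2 = {} \<and>
            (\<forall>\<alpha>\<in>R1. \<forall>\<beta>\<in>R2. \<alpha> \<bullet> \<beta> = 0))"

definition simple_roots :: "'a::euclidean_space set \<Rightarrow> 'a set \<Rightarrow> bool" where
  "simple_roots R \<Delta> \<longleftrightarrow> \<Delta> \<subseteq> R \<and> independent \<Delta> \<and>
     (\<forall>\<alpha>\<in>R. \<exists>c. (\<forall>\<delta>\<in>\<Delta>. c \<delta> \<in> \<int>) \<and>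
        ((\<forall>\<delta>\<in>\<Delta>. c \<delta> \<ge> 0) \<or> (\<forall>\<delta>\<in>\<Delta>. c \<delta> \<le> 0)) \<and>
        \<alpha> = (\<Sum>\<delta>\<in>\<Delta>. c \<delta> *\<^sub>R \<delta>))"

definition pos_roots :: "'a::euclidean_space set \<Rightarrow> 'a set \<Rightarrow> 'a set" where
  "pos_roots R \<Delta> = {\<alpha>\<in>R. \<exists>c. (\<forall>\<delta>\<in>\<Delta>. c \<delta> \<in> \<int> \<and> c \<delta> \<ge> 0) \<and>
                                \<alpha> = (\<Sum>\<delta>\<in>\<Delta>. c \<delta> *\<^sub>R \<delta>)}"

definition dominant :: "'a::euclidean_space set \<Rightarrow> 'a set \<Rightarrow> 'a \<Rightarrow> bool" where
  "dominant R \<Delta> lam \<longleftrightarrow> (\<forall>\<alpha>\<in>pos_roots R \<Delta>. lam \<bullet> coroot \<alpha> \<in> \<int> \<and> lam \<bullet> coroot \<alpha> \<ge> 0)"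

definition hyp :: "'a::euclidean_space \<Rightarrow> int \<Rightarrow> 'a set" where
  "hyp \<alpha> k = {\<mu>. \<mu> \<bullet> coroot \<alpha> = of_int k}"

definition alcoves :: "'a::euclidean_space set \<Rightarrow> 'a set set" where
  "alcoves R = components (UNIV - (\<Union>\<alpha>\<in>R. \<Union>k. hyp \<alpha> k))"

definition fund_alcove :: "'a::euclidean_space set \<Rightarrow> 'a set \<Rightarrow> 'a set" where
  "fund_alcove R \<Delta> = {\<mu>. \<forall>\<alpha>\<in>pos_roots R \<Delta>. 0 < \<mu> \<bullet> coroot \<alpha> \<and> \<mu> \<bullet> coroot \<alpha> < 1}"

definition common_wall_in :: "'a::euclidean_space set \<Rightarrow> 'a set \<Rightarrow> 'a \<Rightarrow> int \<Rightarrow> bool" where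
  "common_wall_in A B \<beta> k \<longleftrightarrow>
     (\<exists>p r. p \<in> hyp \<beta> k \<and> r > 0 \<and> hyp \<beta> k \<inter> ball p r \<subseteq> closure A \<inter> closure B)"

definition adjacent :: "'a::euclidean_space set \<Rightarrow> 'a set \<Rightarrow> 'a set \<Rightarrow> bool" where
  "adjacent R A B \<longleftrightarrow> A \<in> alcoves R \<and> B \<in> alcoves R \<and> A \<noteq> B \<and>
     (\<exists>\<beta>\<in>R. \<exists>k. common_wall_in A B \<beta> k)"

definition alcove_step :: "'a::euclidean_space set \<Rightarrow> 'a set \<Rightarrow> 'a \<Rightarrow> 'a set \<Rightarrow> bool" where
  "alcove_step R A \<beta> B \<longleftrightarrow> adjacent R A B \<and> \<beta> \<in> R \<and>
     (\<exists>k. common_wall_in A B \<beta> k \<and>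
          (\<forall>\<mu>\<in>A. \<mu> \<bullet> coroot \<beta> < of_int k) \<and> (\<forall>\<mu>\<in>B. \<mu> \<bullet> coroot \<beta> > of_int k))"

definition alcove_path :: "'a::euclidean_space set \<Rightarrow> (nat \<Rightarrow> 'a set) \<Rightarrow> nat \<Rightarrow> 'a set \<Rightarrow> 'a set \<Rightarrow> bool" where
  "alcove_path R As m A B \<longleftrightarrow> As 0 = A \<and> As m = B \<and> (\<forall>i<m. adjacent R (As i) (As (Suc i)))"

text \<open>A lambda-chain (beta_0,...,beta_{m-1}) (0-based indexing).\<close>
definition lambda_chain :: "'a::euclidean_space set \<Rightarrow> 'a set \<Rightarrow> 'a \<Rightarrow> (nat \<Rightarrow> 'a) \<Rightarrow> nat \<Rightarrow> bool" where
  "lambda_chain R \<Delta> lam \<beta> m \<longleftrightarrow>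
     (let A0 = fund_alcove R \<Delta>; Al = (\<lambda>\<mu>. \<mu> - lam) ` fund_alcove R \<Delta> in
       (\<exists>As. As 0 = A0 \<and> As m = Al \<and> (\<forall>i<m. alcove_step R (As i) (- \<beta> i) (As (Suc i)))) \<and>
       (\<forall>Bs m'. alcove_path R Bs m' A0 Al \<longrightarrow> m \<le> m'))"

definition lcount :: "(nat \<Rightarrow> 'a) \<Rightarrow> nat \<Rightarrow> nat" where
  "lcount \<beta> i = card {j. j < i \<and> \<beta> j = \<beta> i}"

end

theory Submission
  imports Defs
begin



lemma coroot_neg: "coroot (- a) = - coroot a"
  by (simp add: coroot_def)

lemma hyp_neg: "hyp (- a) (- k) = hyp a k"
  by (auto simp: hyp_def coroot_neg)

lemma coroot_self: "(a::'a::euclidean_space) \<noteq> 0 \<Longrightarrow> a \<bullet> coroot a = 2"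
  by (simp add: coroot_def)

lemma rs_neg: assumes "root_system R" "a \<in> R" shows "- a \<in> R"
proof -
  have "a \<noteq> 0" using assms by (auto simp: root_system_def)
  hence "refl a a = - a" by (simp add: refl_def coroot_self algebra_simps scaleR_2)
  thus ?thesis using assms unfolding root_system_def by metis
qed

lemma rs_par: assumes "root_system R" "a \<in> R" "c *\<^sub>R a \<in> R" shows "c = 1 \<or> c = -1"
  using assms unfolding root_system_def by blast

lemma rs_int: assumes "root_system R" "a \<in> R" "b \<in> R" shows "b \<bullet> coroot a \<in> \<int>"
  using assms unfolding root_system_def by blast

lemma rs_refl: assumes "root_system R" "a \<in> R" "b \<in> R" shows "refl a b \<in> R"
  using assms unfolding root_system_def by blast

lemma rs_nz: assumes "root_system R" "a \<in> R" shows "a \<noteq> 0"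
  using assms unfolding root_system_def by blast

definition lev :: "'a::euclidean_space set \<Rightarrow> 'a \<Rightarrow> int" where
  "lev A g = floor ((SOME \<mu>. \<mu> \<in> A) \<bullet> coroot g)"

lemma alc_sub: "A \<in> alcoves R \<Longrightarrow> A \<subseteq> UNIV - (\<Union>\<alpha>\<in>R. \<Union>k. hyp \<alpha> k)"
  unfolding alcoves_def using in_components_subset by blast

lemma alc_ne: "A \<in> alcoves R \<Longrightarrow> A \<noteq> {}"
  unfolding alcoves_def using in_components_nonempty by blast

lemma alc_conn: "A \<in> alcoves R \<Longrightarrow> connected A"
  unfolding alcoves_def using in_components_connected by blast

lemma alc_nonint: assumes "A \<in> alcoves R" "g \<in> R" "\<mu> \<in> A" shows "\<mu> \<bullet> coroot g \<noteq> of_int k"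
proof
  assume "\<mu> \<bullet> coroot g = of_int k"
  hence "\<mu> \<in> hyp g k" by (simp add: hyp_def)
  thus False using alc_sub[OF assms(1)] assms by blast
qed

lemma alc_floor_eq: assumes "A \<in> alcoves R" "g \<in> R" "x \<in> A" "y \<in> A"
  shows "floor (x \<bullet> coroot g) \<le> floor (y \<bullet> coroot g)"
proof (rule ccontr)
  assume nt: "\<not> floor (x \<bullet> coroot g) \<le> floor (y \<bullet> coroot g)"
  define b where "b = floor (x \<bullet> coroot g)"
  have "y \<bullet> coroot g < of_int b" unfolding b_def using nt
    by (metis floor_less_iff not_le)
  moreover have "of_int b \<le> x \<bullet> coroot g" unfolding b_def by simp
  ultimately obtain z where "z \<in> A" "inner (coroot g) z = of_int b"
    using connected_ivt_hyperplane[OF alc_conn[OF assms(1)] assms(4) assms(3), of "coroot g" "of_int b"]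
    by (auto simp: inner_commute)
  thus False using alc_nonint[OF assms(1,2), of z b] by (simp add: inner_commute)
qed

lemma lev_bounds: assumes "A \<in> alcoves R" "g \<in> R" "\<mu> \<in> A"
  shows "of_int (lev A g) < \<mu> \<bullet> coroot g \<and> \<mu> \<bullet> coroot g < of_int (lev A g) + 1"
proof -
  define x where "x = (SOME \<mu>. \<mu> \<in> A)"
  have x: "x \<in> A" unfolding x_def using alc_ne[OF assms(1)] by (metis some_in_eq)
  have e: "lev A g = floor (\<mu> \<bullet> coroot g)" unfolding lev_def x_def[symmetric]
    using alc_floor_eq[OF assms(1,2) x assms(3)] alc_floor_eq[OF assms(1,2) assms(3) x] by linarith
  have "\<mu> \<bullet> coroot g \<noteq> of_int (floor (\<mu> \<bullet> coroot g))" using alc_nonint[OF assms] .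
  moreover have "of_int (floor (\<mu> \<bullet> coroot g)) \<le> \<mu> \<bullet> coroot g" by (rule of_int_floor_le)
  moreover have "\<mu> \<bullet> coroot g < of_int (floor (\<mu> \<bullet> coroot g)) + 1" by (rule real_of_int_floor_add_one_gt)
  ultimately show ?thesis unfolding e by linarith
qed

lemma lev_closure: assumes "A \<in> alcoves R" "g \<in> R" "\<mu> \<in> closure A"
  shows "of_int (lev A g) \<le> \<mu> \<bullet> coroot g \<and> \<mu> \<bullet> coroot g \<le> of_int (lev A g) + 1"
proof -
  let ?S = "{\<mu>. of_int (lev A g) \<le> \<mu> \<bullet> coroot g \<and> \<mu> \<bullet> coroot g \<le> of_int (lev A g) + 1}"
  have "closed ?S" by (intro closed_Collect_conj closed_Collect_le continuous_intros)
  moreover have "A \<subseteq> ?S" using lev_bounds[OF assms(1,2)] by fastforce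
  ultimately have "closure A \<subseteq> ?S" by (rule closure_minimal[rotated])
  thus ?thesis using assms(3) by blast
qed

lemma lev_unique: assumes "A \<in> alcoves R" "g \<in> R" "\<mu> \<in> A" "of_int n < \<mu> \<bullet> coroot g" "\<mu> \<bullet> coroot g < of_int n + 1"
  shows "lev A g = n"
proof -
  have "lev A g < n + 1" "n < lev A g + 1" using lev_bounds[OF assms(1-3)] assms(4,5) by linarith+
  thus ?thesis by linarith
qed




lemma floor_of_between: assumes "of_int n \<le> r" "r \<le> of_int n + 1" "r \<notin> \<int>"
  shows "floor r = n"
proof -
  have "r \<noteq> of_int n" "r \<noteq> of_int (n+1)" using assms(3) by (auto simp del: of_int_add)
  hence "of_int n < r" "r < of_int n + 1" using assms(1,2) by auto
  thus ?thesis by (simp add: floor_eq_iff)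
qed

lemma wall_lev_eq:
  assumes R: "root_system R" and A: "A \<in> alcoves R" and B: "B \<in> alcoves R"
    and g: "g \<in> R" and w: "common_wall_in A B d c" and np: "\<forall>r. g \<noteq> r *\<^sub>R d"
  shows "lev A g = lev B g"
proof -
  obtain p r0 where p: "p \<in> hyp d c" and r0: "r0 > 0" and sub: "hyp d c \<inter> ball p r0 \<subseteq> closure A \<inter> closure B"
    using w unfolding common_wall_in_def by blast
  define dv where "dv = g - ((g \<bullet> d) / (d \<bullet> d)) *\<^sub>R d"
  have dvd: "dv \<bullet> d = 0" unfolding dv_def by (cases "d = 0") (simp_all add: inner_diff_left)
  have dvnz: "dv \<noteq> 0" using np unfolding dv_def by (metis eq_iff_diff_eq_0)
  have ge: "g = dv + ((g \<bullet> d) / (d \<bullet> d)) *\<^sub>R d" by (simp add: dv_def)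
  have "dv \<bullet> g = dv \<bullet> (dv + ((g \<bullet> d) / (d \<bullet> d)) *\<^sub>R d)" using ge by (rule arg_cong)
  also have "\<dots> = dv \<bullet> dv" using dvd by (simp add: inner_add_right inner_commute)
  finally have "dv \<bullet> g = dv \<bullet> dv" .
  hence dvg: "dv \<bullet> g > 0" using dvnz by simp
  have gnz: "g \<noteq> 0" using rs_nz[OF R g] .
  define cg where "cg = dv \<bullet> coroot g"
  have cgnz: "cg \<noteq> 0" unfolding cg_def coroot_def using dvg gnz by simp
  have dvc: "dv \<bullet> coroot d = 0" unfolding coroot_def using dvd by simp
  define s1 where "s1 = r0 / (2 * (norm dv + r0 * \<bar>cg\<bar>))"
  have nd: "norm dv > 0" using dvnz by simp
  have s1p: "s1 > 0" unfolding s1_def using r0 nd by (simp add: add_pos_nonneg)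
  have s1d: "s1 * norm dv < r0"
  proof -
    have "s1 * norm dv = r0 * norm dv / (2 * (norm dv + r0 * \<bar>cg\<bar>))" unfolding s1_def by simp
    also have "\<dots> \<le> r0 * norm dv / (2 * norm dv)"
    proof (rule divide_left_mono)
      show "0 \<le> r0 * norm dv" using r0 nd by simp
      show "2 * norm dv \<le> 2 * (norm dv + r0 * \<bar>cg\<bar>)" using r0 by simp
      have "0 < norm dv + r0 * \<bar>cg\<bar>" using nd r0 by (simp add: add_pos_nonneg)
      thus "0 < 2 * (norm dv + r0 * \<bar>cg\<bar>) * (2 * norm dv)" using nd by simp
    qed
    also have "\<dots> < r0" using r0 nd by simp
    finally show ?thesis .
  qed
  have s1c: "s1 * \<bar>cg\<bar> < 1"
  proof -
    have "s1 * \<bar>cg\<bar> = r0 * \<bar>cg\<bar> / (2 * (norm dv + r0 * \<bar>cg\<bar>))" unfolding s1_def by simp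
    also have "\<dots> < 1"
    proof -
      have "0 \<le> r0 * \<bar>cg\<bar>" using r0 by simp
      have h0: "0 < norm dv + r0 * \<bar>cg\<bar>" using nd \<open>0 \<le> r0 * \<bar>cg\<bar>\<close> by (rule add_pos_nonneg)
      hence "0 < 2 * (norm dv + r0 * \<bar>cg\<bar>)" by simp
      moreover have "2 * (norm dv + r0 * \<bar>cg\<bar>) = 2 * norm dv + 2 * (r0 * \<bar>cg\<bar>)" by (simp add: distrib_left)
      hence "r0 * \<bar>cg\<bar> < 2 * (norm dv + r0 * \<bar>cg\<bar>)" using nd \<open>0 \<le> r0 * \<bar>cg\<bar>\<close> by linarith
      ultimately show ?thesis by (simp add: divide_less_eq)
    qed
    finally show ?thesis .
  qed
  have inw: "p + s *\<^sub>R dv \<in> closure A \<inter> closure B" if "0 < s" "s \<le> s1" for s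
  proof -
    have "p + s *\<^sub>R dv \<in> hyp d c" using p dvc by (simp add: hyp_def inner_add_left)
    moreover have "dist p (p + s *\<^sub>R dv) < r0"
    proof -
      have "dist p (p + s *\<^sub>R dv) = s * norm dv" using that by (simp add: dist_norm)
      also have "\<dots> \<le> s1 * norm dv" using that by (simp add: mult_right_mono)
      finally show ?thesis using s1d by linarith
    qed
    ultimately show ?thesis using sub by auto
  qed
  have val: "(p + s *\<^sub>R dv) \<bullet> coroot g = p \<bullet> coroot g + s * cg" for s
    by (simp add: cg_def inner_add_left)
  obtain z where z: "z \<in> closure A \<inter> closure B" "z \<bullet> coroot g \<notin> \<int>"
  proof (cases "(p + s1 *\<^sub>R dv) \<bullet> coroot g \<in> \<int>")
    case False thus ?thesis using that inw[OF s1p order_refl] by blast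
  next
    case True
    show ?thesis
    proof (cases "(p + (s1/2) *\<^sub>R dv) \<bullet> coroot g \<in> \<int>")
      case False thus ?thesis using that inw[of "s1/2"] s1p by auto
    next
      case T2: True
      have "(p + s1 *\<^sub>R dv) \<bullet> coroot g - (p + (s1/2) *\<^sub>R dv) \<bullet> coroot g \<in> \<int>"
        using True T2 by (rule Ints_diff)
      hence "s1 * cg / 2 \<in> \<int>" unfolding val by (simp add: mult.commute)
      then obtain n where n: "s1 * cg / 2 = of_int n" by (auto elim: Ints_cases)
      have "\<bar>s1 * cg / 2\<bar> < 1" using s1c s1p by (simp add: abs_mult)
      hence "\<bar>of_int n\<bar> < (1::real)" using n by simp
      hence "\<bar>n\<bar> < 1" by linarith
      hence "n = 0" by simp
      hence "s1 * cg = 0" using n by simp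
      thus ?thesis using s1p cgnz by simp
    qed
  qed
  have "lev A g = floor (z \<bullet> coroot g)"
    using lev_closure[OF A g, of z] z floor_of_between[of "lev A g" "z \<bullet> coroot g"] by auto
  moreover have "lev B g = floor (z \<bullet> coroot g)"
    using lev_closure[OF B g, of z] z floor_of_between[of "lev B g" "z \<bullet> coroot g"] by auto
  ultimately show ?thesis by simp
qed

lemma step_lev:
  assumes R: "root_system R" and A: "A \<in> alcoves R" and B: "B \<in> alcoves R" and g: "g \<in> R"
    and w: "common_wall_in A B g k" and sa: "\<forall>\<mu>\<in>A. \<mu> \<bullet> coroot g < of_int k"
    and sb: "\<forall>\<mu>\<in>B. \<mu> \<bullet> coroot g > of_int k"
  shows "lev A g = k - 1 \<and> lev B g = k"
proof -
  obtain p r0 where p: "p \<in> hyp g k" and r0: "r0 > 0" and sub: "hyp g k \<inter> ball p r0 \<subseteq> closure A \<inter> closure B"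
    using w unfolding common_wall_in_def by blast
  have pc: "p \<in> closure A" "p \<in> closure B" using p r0 sub by auto
  have pv: "p \<bullet> coroot g = of_int k" using p by (simp add: hyp_def)
  obtain a where a: "a \<in> A" using alc_ne[OF A] by blast
  obtain b where b: "b \<in> B" using alc_ne[OF B] by blast
  have 1: "of_int (lev A g) \<le> (of_int k::real)" "of_int k \<le> of_int (lev A g) + (1::real)"
    using lev_closure[OF A g pc(1)] pv by auto
  have 2: "of_int (lev A g) < (of_int k::real)" using lev_bounds[OF A g a] sa a by fastforce
  have 3: "of_int (lev B g) \<le> (of_int k::real)" "of_int k \<le> of_int (lev B g) + (1::real)"
    using lev_closure[OF B g pc(2)] pv by auto
  have 4: "(of_int k::real) < of_int (lev B g) + 1" using lev_bounds[OF B g b] sb b by fastforce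
  from 1 2 3 4 have "lev A g < k" "k \<le> lev A g + 1" "lev B g \<le> k" "k < lev B g + 1"
    by linarith+
  thus ?thesis by linarith
qed

lemma lev_neg: assumes R: "root_system R" and A: "A \<in> alcoves R" and g: "g \<in> R"
  shows "lev A (- g) = - lev A g - 1"
proof -
  obtain a where a: "a \<in> A" using alc_ne[OF A] by blast
  have b: "of_int (lev A g) < a \<bullet> coroot g" "a \<bullet> coroot g < of_int (lev A g) + 1"
    using lev_bounds[OF A g a] by auto
  show ?thesis
    by (rule lev_unique[OF A rs_neg[OF R g] a]) (use b in \<open>auto simp: coroot_neg\<close>)
qed

lemma alcove_eq:
  assumes R: "root_system R" and A: "A \<in> alcoves R" and B: "B \<in> alcoves R"
    and eq: "\<forall>g\<in>R. lev A g = lev B g"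
  shows "A = B"
proof -
  let ?S = "UNIV - (\<Union>\<alpha>\<in>R. \<Union>k. hyp \<alpha> k)"
  define Box where "Box = (\<Inter>g\<in>R. {\<mu>. inner (coroot g) \<mu> > of_int (lev A g)} \<inter> {\<mu>. inner (coroot g) \<mu> < of_int (lev A g) + 1})"
  have cv: "convex Box" unfolding Box_def
    by (intro convex_INT ballI convex_Int convex_halfspace_lt convex_halfspace_gt)
  have BoxS: "Box \<subseteq> ?S"
  proof
    fix \<mu> assume m: "\<mu> \<in> Box"
    show "\<mu> \<in> ?S"
    proof (rule ccontr)
      assume "\<mu> \<notin> ?S"
      then obtain a k where ak: "a \<in> R" "\<mu> \<in> hyp a k" by auto
      hence "of_int (lev A a) < (of_int k::real)" "(of_int k::real) < of_int (lev A a) + 1"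
        using m unfolding Box_def by (auto simp: hyp_def inner_commute)
      hence "lev A a < k" "k < lev A a + 1" by linarith+
      thus False by linarith
    qed
  qed
  have AB: "A \<subseteq> Box" using lev_bounds[OF A] unfolding Box_def by (auto simp: inner_commute)
  have BB: "B \<subseteq> Box" using lev_bounds[OF B] eq unfolding Box_def by (auto simp: inner_commute)
  have "Box = A" using A unfolding alcoves_def in_components_maximal
    using AB BoxS convex_connected[OF cv] alc_ne[OF A] by blast
  moreover have "Box = B" using B unfolding alcoves_def in_components_maximal
    using BB BoxS convex_connected[OF cv] alc_ne[OF B] by blast
  ultimately show ?thesis by simp
qed

lemma wall_par_neq:
  assumes R: "root_system R" and A: "A \<in> alcoves R" and B: "B \<in> alcoves R" and d: "d \<in> R"
    and w: "common_wall_in A B d c" and ne: "A \<noteq> B"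
  shows "lev A d \<noteq> lev B d"
proof
  assume e: "lev A d = lev B d"
  have "\<forall>g\<in>R. lev A g = lev B g"
  proof
    fix g assume g: "g \<in> R"
    show "lev A g = lev B g"
    proof (cases "\<exists>r. g = r *\<^sub>R d")
      case True
      then obtain r where r: "g = r *\<^sub>R d" by blast
      hence "r = 1 \<or> r = -1" using rs_par[OF R d] g by blast
      thus ?thesis using r e lev_neg[OF R A d] lev_neg[OF R B d] by auto
    next
      case False thus ?thesis using wall_lev_eq[OF R A B g w] by blast
    qed
  qed
  thus False using alcove_eq[OF R A B] ne by blast
qed




definition sref :: "'a::euclidean_space \<Rightarrow> int \<Rightarrow> 'a \<Rightarrow> 'a" where
  "sref r k \<mu> = \<mu> - (\<mu> \<bullet> coroot r - of_int k) *\<^sub>R r"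

lemma refl_inner_self: assumes "r \<noteq> 0" shows "refl r v \<bullet> refl r v = v \<bullet> v"
proof -
  define c where "c = v \<bullet> coroot r"
  have rr: "r \<bullet> r \<noteq> 0" using assms by simp
  have c2: "c * (r \<bullet> r) = 2 * (v \<bullet> r)" unfolding c_def coroot_def using rr by simp
  have "refl r v \<bullet> refl r v = v \<bullet> v - 2 * c * (v \<bullet> r) + c * (c * (r \<bullet> r))"
    unfolding refl_def c_def[symmetric] by (simp add: inner_diff_left inner_diff_right inner_commute algebra_simps)
  also have "\<dots> = v \<bullet> v" unfolding c2 by simp
  finally show ?thesis .
qed

lemma sref_coord0: assumes "r \<noteq> 0" "g \<noteq> 0"
  shows "\<mu> \<bullet> coroot (refl r g) = \<mu> \<bullet> coroot g - (\<mu> \<bullet> coroot r) * (r \<bullet> coroot g)"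
proof -
  have n: "refl r g \<bullet> refl r g = g \<bullet> g" by (rule refl_inner_self[OF assms(1)])
  have "\<mu> \<bullet> coroot (refl r g) = (2 / (g \<bullet> g)) * (\<mu> \<bullet> g - (g \<bullet> coroot r) * (\<mu> \<bullet> r))"
    unfolding coroot_def[of "refl r g"] n unfolding refl_def by (simp add: inner_diff_right)
  also have "\<dots> = \<mu> \<bullet> coroot g - (\<mu> \<bullet> coroot r) * (r \<bullet> coroot g)"
    unfolding coroot_def by (simp add: inner_commute algebra_simps)
  finally show ?thesis .
qed

lemma sref_rho: assumes "r \<noteq> 0" shows "sref r k \<mu> \<bullet> coroot r = 2 * of_int k - \<mu> \<bullet> coroot r"
  unfolding sref_def using coroot_self[OF assms] by (simp add: inner_diff_left algebra_simps)

lemma sref_inv: assumes "r \<noteq> 0" shows "sref r k (sref r k \<mu>) = \<mu>"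
proof -
  have "sref r k (sref r k \<mu>) = sref r k \<mu> - (2 * of_int k - \<mu> \<bullet> coroot r - of_int k) *\<^sub>R r"
    unfolding sref_def[of r k "sref r k \<mu>"] sref_rho[OF assms] ..
  also have "\<dots> = \<mu>" unfolding sref_def by (simp add: algebra_simps)
  finally show ?thesis .
qed

lemma sref_image_image: assumes "r \<noteq> 0" shows "sref r k ` sref r k ` X = X"
  by (simp add: image_image sref_inv[OF assms])

lemma sref_coord: assumes "r \<noteq> 0" "g \<noteq> 0"
  shows "sref r k \<mu> \<bullet> coroot g = \<mu> \<bullet> coroot (refl r g) + of_int k * (r \<bullet> coroot g)"
  unfolding sref_coord0[OF assms] sref_def by (simp add: inner_diff_left algebra_simps)

lemma sref_dist: assumes "r \<noteq> 0" shows "dist (sref r k a) (sref r k b) = dist a b"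
proof -
  have "sref r k a - sref r k b = refl r (a - b)" unfolding sref_def refl_def
    by (simp add: inner_diff_left algebra_simps)
  hence "norm (sref r k a - sref r k b) ^ 2 = norm (a - b) ^ 2"
    using refl_inner_self[OF assms, of "a - b"] by (simp add: power2_norm_eq_inner)
  thus ?thesis by (simp add: dist_norm)
qed

lemma sref_cont: "continuous_on X (sref r k)"
  unfolding sref_def by (intro continuous_intros)

lemma sref_hyp: assumes R: "root_system R" and r: "r \<in> R" and g: "g \<in> R"
  shows "\<exists>c. (\<forall>\<mu>. sref r k \<mu> \<in> hyp g n \<longleftrightarrow> \<mu> \<in> hyp (refl r g) (n - k * c))"
proof -
  obtain c where c: "r \<bullet> coroot g = of_int c" using rs_int[OF R g r] by (auto elim: Ints_cases)
  show ?thesis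
    by (rule exI[of _ c]) (auto simp: hyp_def sref_coord[OF rs_nz[OF R r] rs_nz[OF R g]] c)
qed

lemma inv_pres: assumes "\<And>\<mu>. f \<mu> \<in> U \<Longrightarrow> \<mu> \<in> U" "\<And>\<mu>. f (f \<mu>) = \<mu>"
  shows "f \<mu> \<in> UNIV - U \<longleftrightarrow> \<mu> \<in> UNIV - U"
  using assms by (metis DiffD2 DiffI UNIV_I)

lemma sref_S: assumes R: "root_system R" and r: "r \<in> R"
  shows "sref r k \<mu> \<in> UNIV - (\<Union>\<alpha>\<in>R. \<Union>k. hyp \<alpha> k) \<longleftrightarrow> \<mu> \<in> UNIV - (\<Union>\<alpha>\<in>R. \<Union>k. hyp \<alpha> k)"
proof (rule inv_pres)
  fix \<mu> assume th: "sref r k \<mu> \<in> (\<Union>\<alpha>\<in>R. \<Union>k. hyp \<alpha> k)"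
  obtain g n where gn: "g \<in> R" "sref r k \<mu> \<in> hyp g n" using th by blast
  obtain c where "\<forall>\<mu>. sref r k \<mu> \<in> hyp g n \<longleftrightarrow> \<mu> \<in> hyp (refl r g) (n - k * c)"
    using sref_hyp[OF R r gn(1)] by blast
  hence "\<mu> \<in> hyp (refl r g) (n - k * c)" using gn by blast
  moreover have "refl r g \<in> R" using rs_refl[OF R r gn(1)] .
  ultimately show "\<mu> \<in> (\<Union>\<alpha>\<in>R. \<Union>k. hyp \<alpha> k)" by blast
next
  fix \<mu> show "sref r k (sref r k \<mu>) = \<mu>" by (rule sref_inv[OF rs_nz[OF R r]])
qed

lemma sref_alcove: assumes R: "root_system R" and r: "r \<in> R" and A: "A \<in> alcoves R"
  shows "sref r k ` A \<in> alcoves R"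
proof -
  let ?S = "UNIV - (\<Union>\<alpha>\<in>R. \<Union>k. hyp \<alpha> k)"
  let ?s = "sref r k"
  have rnz: "r \<noteq> 0" using rs_nz[OF R r] .
  have Ac: "A \<in> components ?S" using A unfolding alcoves_def .
  have A1: "A \<noteq> {}" using in_components_nonempty[OF Ac] .
  have A2: "A \<subseteq> ?S" using in_components_subset[OF Ac] .
  have A3: "connected A" using in_components_connected[OF Ac] .
  have mx: "D = A" if "D \<noteq> {}" "A \<subseteq> D" "D \<subseteq> ?S" "connected D" for D
    using Ac that unfolding in_components_maximal by blast
  have B1: "?s ` A \<noteq> {}" using A1 by simp
  have B2: "?s ` A \<subseteq> ?S"
  proof (rule image_subsetI)
    fix x assume "x \<in> A" hence "x \<in> ?S" by (rule subsetD[OF A2])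
    thus "?s x \<in> ?S" by (simp only: sref_S[OF R r])
  qed
  have B3: "connected (?s ` A)" by (rule connected_continuous_image[OF sref_cont A3])
  have B4: "D = ?s ` A" if D: "D \<noteq> {}" "?s ` A \<subseteq> D" "D \<subseteq> ?S" "connected D" for D
  proof -
    have "?s ` D = A"
    proof (rule mx)
      show "?s ` D \<noteq> {}" using D(1) by simp
      show "A \<subseteq> ?s ` D" using image_mono[OF D(2), of ?s] unfolding sref_image_image[OF rnz] .
      show "?s ` D \<subseteq> ?S"
      proof (rule image_subsetI)
        fix x assume "x \<in> D" hence "x \<in> ?S" by (rule subsetD[OF D(3)])
        thus "?s x \<in> ?S" by (simp only: sref_S[OF R r])
      qed
      show "connected (?s ` D)" by (rule connected_continuous_image[OF sref_cont D(4)])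
    qed
    hence "?s ` ?s ` D = ?s ` A" by simp
    thus ?thesis unfolding sref_image_image[OF rnz] .
  qed
  have "?s ` A \<in> components ?S" unfolding in_components_maximal
  proof (intro conjI allI impI)
    show "?s ` A \<noteq> {}" "?s ` A \<subseteq> ?S" "connected (?s ` A)" by fact+
    fix D assume "D \<noteq> {} \<and> ?s ` A \<subseteq> D \<and> D \<subseteq> ?S \<and> connected D"
    thus "D = ?s ` A" by (elim conjE) (rule B4)
  qed
  thus ?thesis unfolding alcoves_def .
qed

lemma sref_closure: "sref r k ` closure A \<subseteq> closure (sref r k ` A)"
  by (rule continuous_image_closure_subset[OF sref_cont[of UNIV]]) simp

lemma sref_wall: assumes R: "root_system R" and r: "r \<in> R" and g: "g \<in> R"
    and w: "common_wall_in A B g n"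
  shows "\<exists>n'. common_wall_in (sref r k ` A) (sref r k ` B) (refl r g) n'"
proof -
  have rnz: "r \<noteq> 0" using rs_nz[OF R r] .
  obtain c where c: "\<And>\<mu>. sref r k \<mu> \<in> hyp g n \<longleftrightarrow> \<mu> \<in> hyp (refl r g) (n - k * c)"
    using sref_hyp[OF R r g] by blast
  obtain p r0 where p: "p \<in> hyp g n" and r0: "r0 > 0" and sub: "hyp g n \<inter> ball p r0 \<subseteq> closure A \<inter> closure B"
    using w unfolding common_wall_in_def by blast
  let ?s = "sref r k"
  have "?s (?s p) \<in> hyp g n" unfolding sref_inv[OF rnz] by (rule p)
  hence P1: "?s p \<in> hyp (refl r g) (n - k * c)" unfolding c .
  have P2: "hyp (refl r g) (n - k * c) \<inter> ball (?s p) r0 \<subseteq> closure (?s ` A) \<inter> closure (?s ` B)"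
  proof
    fix z assume z: "z \<in> hyp (refl r g) (n - k * c) \<inter> ball (?s p) r0"
    have h1: "?s z \<in> hyp g n" unfolding c using z by (rule IntD1)
    have "dist p (?s z) = dist (?s p) z" using sref_dist[OF rnz, of k "?s p" z] unfolding sref_inv[OF rnz] .
    also have "\<dots> < r0" using z by simp
    finally have "?s z \<in> ball p r0" by simp
    with h1 have "?s z \<in> closure A \<inter> closure B" using sub by blast
    hence "?s (?s z) \<in> ?s ` closure A" "?s (?s z) \<in> ?s ` closure B" by auto
    hence "z \<in> ?s ` closure A" "z \<in> ?s ` closure B" unfolding sref_inv[OF rnz] .
    thus "z \<in> closure (?s ` A) \<inter> closure (?s ` B)" using sref_closure[of r k A] sref_closure[of r k B] by blast
  qed
  show ?thesis unfolding common_wall_in_def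
    by (intro exI[of _ "n - k * c"] exI[of _ "?s p"] exI[of _ r0] conjI P1 P2 r0)
qed

lemma sref_adjacent: assumes R: "root_system R" and r: "r \<in> R" and adj: "adjacent R A B"
  shows "adjacent R (sref r k ` A) (sref r k ` B)"
proof -
  have rnz: "r \<noteq> 0" using rs_nz[OF R r] .
  obtain g n where g: "g \<in> R" "common_wall_in A B g n" using adj unfolding adjacent_def by blast
  obtain n' where "common_wall_in (sref r k ` A) (sref r k ` B) (refl r g) n'"
    using sref_wall[OF R r g] by blast
  moreover have "refl r g \<in> R" using rs_refl[OF R r g(1)] .
  moreover have "sref r k ` A \<noteq> sref r k ` B"
    using adj unfolding adjacent_def by (metis sref_image_image[OF rnz])
  ultimately show ?thesis using adj sref_alcove[OF R r] unfolding adjacent_def by blast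
qed

lemma sref_swap: assumes R: "root_system R" and r: "r \<in> R" and A: "A \<in> alcoves R" and B: "B \<in> alcoves R"
    and w: "common_wall_in A B r k" and ne: "A \<noteq> B"
  shows "sref r k ` B = A"
proof -
  have rnz: "r \<noteq> 0" using rs_nz[OF R r] .
  let ?s = "sref r k"
  have sB: "?s ` B \<in> alcoves R" by (rule sref_alcove[OF R r B])
  obtain p r0 where p: "p \<in> hyp r k" and r0: "r0 > 0" and sub: "hyp r k \<inter> ball p r0 \<subseteq> closure A \<inter> closure B"
    using w unfolding common_wall_in_def by blast
  have fix1: "?s z = z" if "z \<in> hyp r k" for z using that by (simp add: sref_def hyp_def)
  have w2: "common_wall_in A (?s ` B) r k" unfolding common_wall_in_def
  proof (intro exI conjI)
    show "p \<in> hyp r k" "r0 > 0" by fact+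
    show "hyp r k \<inter> ball p r0 \<subseteq> closure A \<inter> closure (?s ` B)"
    proof
      fix z assume z: "z \<in> hyp r k \<inter> ball p r0"
      hence "z \<in> closure A" "z \<in> closure B" using sub by auto
      moreover have "?s z = z" using z fix1 by blast
      ultimately show "z \<in> closure A \<inter> closure (?s ` B)" using sref_closure[of r k B] by force
    qed
  qed
  have pA: "p \<in> closure A" and pB: "p \<in> closure B" using p r0 sub by auto
  have pv: "p \<bullet> coroot r = of_int k" using p by (simp add: hyp_def)
  have LA: "lev A r = k - 1 \<or> lev A r = k"
  proof -
    have "of_int (lev A r) \<le> (of_int k::real)" "(of_int k::real) \<le> of_int (lev A r) + 1"
      using lev_closure[OF A r pA] pv by auto
    hence "lev A r \<le> k" "k \<le> lev A r + 1" by linarith+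
    thus ?thesis by linarith
  qed
  have LB: "lev B r = k - 1 \<or> lev B r = k"
  proof -
    have "of_int (lev B r) \<le> (of_int k::real)" "(of_int k::real) \<le> of_int (lev B r) + 1"
      using lev_closure[OF B r pB] pv by auto
    hence "lev B r \<le> k" "k \<le> lev B r + 1" by linarith+
    thus ?thesis by linarith
  qed
  have neq: "lev A r \<noteq> lev B r" by (rule wall_par_neq[OF R A B r w ne])
  have LsB: "lev (?s ` B) r = 2 * k - lev B r - 1"
  proof -
    obtain b where b: "b \<in> B" using alc_ne[OF B] by blast
    have bb: "of_int (lev B r) < b \<bullet> coroot r" "b \<bullet> coroot r < of_int (lev B r) + 1"
      using lev_bounds[OF B r b] by auto
    show ?thesis
    proof (rule lev_unique[OF sB r])
      show "?s b \<in> ?s ` B" using b by blast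
      show "of_int (2 * k - lev B r - 1) < ?s b \<bullet> coroot r"
        using bb unfolding sref_rho[OF rnz] by simp
      show "?s b \<bullet> coroot r < of_int (2 * k - lev B r - 1) + 1"
        using bb unfolding sref_rho[OF rnz] by simp
    qed
  qed
  have er: "lev A r = lev (?s ` B) r" using LA LB neq LsB by auto
  have "\<forall>g\<in>R. lev A g = lev (?s ` B) g"
  proof
    fix g assume g: "g \<in> R"
    show "lev A g = lev (?s ` B) g"
    proof (cases "\<exists>c. g = c *\<^sub>R r")
      case True
      then obtain c where c: "g = c *\<^sub>R r" by blast
      hence "c = 1 \<or> c = -1" using rs_par[OF R r] g by blast
      thus ?thesis using c er lev_neg[OF R A r] lev_neg[OF R sB r] by auto
    next
      case False thus ?thesis using wall_lev_eq[OF R A sB g w2] by blast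
    qed
  qed
  thus ?thesis using alcove_eq[OF R A sB] by simp
qed




lemma shorten:
  assumes R: "root_system R" and r: "r \<in> R"
    and adj: "\<And>i. i < m \<Longrightarrow> adjacent R (As i) (As (Suc i))"
    and ab: "a < b" "b < m"
    and wa: "common_wall_in (As a) (As (Suc a)) r k"
    and wb: "common_wall_in (As b) (As (Suc b)) r k"
  shows "\<exists>Bs. Bs 0 = As 0 \<and> Bs (m - 2) = As m \<and> (\<forall>i<m - 2. adjacent R (Bs i) (Bs (Suc i)))"
proof -
  have rnz: "r \<noteq> 0" using rs_nz[OF R r] .
  let ?s = "sref r k"
  have alc: "As i \<in> alcoves R" if "i \<le> m" for i
  proof (cases "i < m")
    case True thus ?thesis using adj[OF True] unfolding adjacent_def by blast
  next
    case False
    hence "i = Suc (m - 1)" "m - 1 < m" using that ab by auto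
    thus ?thesis using adj[of "m - 1"] unfolding adjacent_def by metis
  qed
  have sa: "?s ` As (Suc a) = As a"
    using sref_swap[OF R r alc alc wa] adj[of a] ab unfolding adjacent_def by simp
  have sb0: "?s ` As (Suc b) = As b"
    using sref_swap[OF R r alc alc wb] adj[of b] ab unfolding adjacent_def by simp
  have sb: "?s ` As b = As (Suc b)"
    using arg_cong[OF sb0, of "(`) ?s"] unfolding sref_image_image[OF rnz] by simp
  have sadj: "adjacent R (?s ` As i) (?s ` As (Suc i))" if "i < m" for i
    using sref_adjacent[OF R r adj[OF that]] .
  define Bs where "Bs j = (if j \<le> a then As j else if j < b then ?s ` As (Suc j) else As (Suc (Suc j)))" for j
  have special: "b = Suc a \<Longrightarrow> As a = As (Suc (Suc a))" using sa sb by simp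
  have "Bs 0 = As 0" unfolding Bs_def by simp
  moreover have "Bs (m - 2) = As m"
  proof -
    consider "m - 2 \<le> a" | "a < m - 2" "m - 2 < b" | "b \<le> m - 2" by linarith
    thus ?thesis
    proof cases
      case 1
      hence "b = Suc a" "m = Suc (Suc a)" using ab by auto
      thus ?thesis unfolding Bs_def using special 1 by simp
    next
      case 2
      hence "b = m - 1" "m = Suc b" using ab by auto
      thus ?thesis unfolding Bs_def using 2 sb by simp
    next
      case 3
      hence "Suc (Suc (m - 2)) = m" using ab by auto
      thus ?thesis unfolding Bs_def using 3 ab by auto
    qed
  qed
  moreover have "adjacent R (Bs j) (Bs (Suc j))" if j: "j < m - 2" for j
  proof -
    consider "Suc j \<le> a" | "j = a" "Suc a < b" | "j = a" "b = Suc a" | "a < j" "Suc j < b"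
      | "a < j" "Suc j = b" | "b \<le> j" using ab by linarith
    thus ?thesis
    proof cases
      case 1 thus ?thesis unfolding Bs_def using adj[of j] j by simp
    next
      case 2 thus ?thesis unfolding Bs_def using sadj[of "Suc a"] sa ab by simp
    next
      case 3
      hence "Bs j = As (Suc (Suc j))" "Bs (Suc j) = As (Suc (Suc (Suc j)))"
        unfolding Bs_def using special by auto
      thus ?thesis using adj[of "Suc (Suc j)"] j by simp
    next
      case 4 thus ?thesis unfolding Bs_def using sadj[of "Suc j"] ab by simp
    next
      case 5
      hence "Bs j = As (Suc (Suc j))" "Bs (Suc j) = As (Suc (Suc (Suc j)))"
        unfolding Bs_def using sb by auto
      thus ?thesis using adj[of "Suc (Suc j)"] j by simp
    next
      case 6 thus ?thesis unfolding Bs_def using adj[of "Suc (Suc j)"] j ab by simp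
    qed
  qed
  ultimately show ?thesis by blast
qed




lemma cwall_neg: "common_wall_in A B (- g) (- k) = common_wall_in A B g k"
  unfolding common_wall_in_def hyp_neg ..

lemma dIVT:
  fixes w :: "nat \<Rightarrow> int"
  assumes st: "\<And>i. x \<le> i \<Longrightarrow> i < y \<Longrightarrow> \<bar>w (Suc i) - w i\<bar> \<le> 1"
    and xy: "x \<le> y" and wx: "w x \<ge> K" and wy: "w y < K"
  shows "\<exists>b. x \<le> b \<and> b < y \<and> w b = K \<and> w (Suc b) = K - 1"
  using st xy wy
proof (induction y)
  case 0 thus ?case using wx by simp
next
  case (Suc y)
  show ?case
  proof (cases "x \<le> y \<and> w y < K")
    case True
    then obtain b where "x \<le> b \<and> b < y \<and> w b = K \<and> w (Suc b) = K - 1"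
      using Suc.IH Suc.prems by auto
    thus ?thesis by (intro exI[of _ b]) auto
  next
    case False
    show ?thesis
    proof (cases "x \<le> y")
      case True
      hence "w y \<ge> K" using False by simp
      moreover have "\<bar>w (Suc y) - w y\<bar> \<le> 1" using Suc.prems True by simp
      ultimately have "w y = K" "w (Suc y) = K - 1" using Suc.prems by auto
      thus ?thesis using True by (intro exI[of _ y]) auto
    next
      case F2: False
      hence "x = Suc y" using Suc.prems by simp
      thus ?thesis using wx Suc.prems by simp
    qed
  qed
qed

locale lchain =
  fixes R :: "'a::euclidean_space set" and D :: "'a set" and lam :: 'a and \<beta> :: "nat \<Rightarrow> 'a"
    and m :: nat and As :: "nat \<Rightarrow> 'a set"
  assumes R: "root_system R" and sr: "simple_roots R D" and dom: "dominant R D lam"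
    and A0: "As 0 = fund_alcove R D" and Am: "As m = (\<lambda>\<mu>. \<mu> - lam) ` fund_alcove R D"
    and st: "\<And>i. i < m \<Longrightarrow> alcove_step R (As i) (- \<beta> i) (As (Suc i))"
    and mn: "\<And>Bs m'. alcove_path R Bs m' (fund_alcove R D) ((\<lambda>\<mu>. \<mu> - lam) ` fund_alcove R D) \<Longrightarrow> m \<le> m'"
    and mpos: "m > 0"
begin

lemma adj: "i < m \<Longrightarrow> adjacent R (As i) (As (Suc i))"
  using st unfolding alcove_step_def by blast

lemma alc: assumes "i \<le> m" shows "As i \<in> alcoves R"
proof (cases "i < m")
  case True thus ?thesis using adj[OF True] unfolding adjacent_def by blast
next
  case False
  hence "i = Suc (m - 1)" "m - 1 < m" using assms mpos by auto
  thus ?thesis using adj[of "m - 1"] unfolding adjacent_def by metis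
qed

lemma beta_R: assumes "i < m" shows "\<beta> i \<in> R"
proof -
  have "- \<beta> i \<in> R" using st[OF assms] unfolding alcove_step_def by blast
  thus ?thesis using rs_neg[OF R] by fastforce
qed

lemma pos_R: "g \<in> pos_roots R D \<Longrightarrow> g \<in> R"
  unfolding pos_roots_def by blast

lemma lev0: assumes g: "g \<in> pos_roots R D" shows "lev (As 0) g = 0"
proof -
  obtain x where x: "x \<in> As 0" using alc_ne[OF alc[of 0]] by auto
  have "0 < x \<bullet> coroot g \<and> x \<bullet> coroot g < 1" using x g unfolding A0 fund_alcove_def by blast
  thus ?thesis using lev_unique[OF alc[of 0] pos_R[OF g] x, of 0] by simp
qed

lemma levm: assumes g: "g \<in> pos_roots R D" shows "lev (As m) g \<le> 0"
proof -
  obtain x where x: "x \<in> As m" using alc_ne[OF alc[of m]] by auto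
  then obtain \<mu> where mu: "\<mu> \<in> fund_alcove R D" "x = \<mu> - lam" unfolding Am by blast
  have b: "0 < \<mu> \<bullet> coroot g" "\<mu> \<bullet> coroot g < 1" using mu g unfolding fund_alcove_def by blast+
  have "lam \<bullet> coroot g \<in> \<int>" "lam \<bullet> coroot g \<ge> 0" using dom g unfolding dominant_def by blast+
  then obtain N where N: "lam \<bullet> coroot g = of_int N" "N \<ge> 0" by (auto elim!: Ints_cases)
  have xv: "x \<bullet> coroot g = \<mu> \<bullet> coroot g - of_int N" using mu N by (simp add: inner_diff_left)
  have "lev (As m) g = - N"
    by (rule lev_unique[OF alc[of m] pos_R[OF g] x]) (use b xv in auto)
  thus ?thesis using N by simp
qed

lemma step_cases:
  assumes i: "i < m" and g: "g \<in> R"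
  shows "(\<beta> i = g \<longrightarrow> lev (As (Suc i)) g = lev (As i) g - 1 \<and> common_wall_in (As i) (As (Suc i)) g (lev (As i) g))
       \<and> (\<beta> i = - g \<longrightarrow> lev (As (Suc i)) g = lev (As i) g + 1 \<and> common_wall_in (As i) (As (Suc i)) g (lev (As (Suc i)) g))
       \<and> (\<beta> i \<noteq> g \<and> \<beta> i \<noteq> - g \<longrightarrow> lev (As (Suc i)) g = lev (As i) g)"
proof -
  have A: "As i \<in> alcoves R" and B: "As (Suc i) \<in> alcoves R" using alc i by auto
  have nb: "- \<beta> i \<in> R" using st[OF i] unfolding alcove_step_def by blast
  obtain k where w: "common_wall_in (As i) (As (Suc i)) (- \<beta> i) k"
    and sa: "\<forall>\<mu>\<in>As i. \<mu> \<bullet> coroot (- \<beta> i) < of_int k"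
    and sb: "\<forall>\<mu>\<in>As (Suc i). \<mu> \<bullet> coroot (- \<beta> i) > of_int k"
    using st[OF i] unfolding alcove_step_def by blast
  have L: "lev (As i) (- \<beta> i) = k - 1" "lev (As (Suc i)) (- \<beta> i) = k"
    using step_lev[OF R A B nb w sa sb] by auto
  have c1: "lev (As (Suc i)) g = lev (As i) g - 1 \<and> common_wall_in (As i) (As (Suc i)) g (lev (As i) g)"
    if e: "\<beta> i = g"
  proof -
    have "lev (As i) g = - k" "lev (As (Suc i)) g = - k - 1"
      using L lev_neg[OF R A g] lev_neg[OF R B g] e by auto
    moreover have "common_wall_in (As i) (As (Suc i)) g (- k)"
      using w e cwall_neg[of "As i" "As (Suc i)" g "- k"] by simp
    ultimately show ?thesis by simp
  qed
  have c2: "lev (As (Suc i)) g = lev (As i) g + 1 \<and> common_wall_in (As i) (As (Suc i)) g (lev (As (Suc i)) g)"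
    if e: "\<beta> i = - g"
  proof -
    have "- \<beta> i = g" using e by simp
    thus ?thesis using L w by auto
  qed
  have c3: "lev (As (Suc i)) g = lev (As i) g" if e: "\<beta> i \<noteq> g" "\<beta> i \<noteq> - g"
  proof -
    have "\<forall>c. g \<noteq> c *\<^sub>R (- \<beta> i)"
    proof
      fix c show "g \<noteq> c *\<^sub>R (- \<beta> i)"
      proof
        assume gc: "g = c *\<^sub>R (- \<beta> i)"
        hence "c = 1 \<or> c = -1" using rs_par[OF R nb] g by blast
        thus False using gc e by auto
      qed
    qed
    thus ?thesis using wall_lev_eq[OF R A B g w] by simp
  qed
  show ?thesis using c1 c2 c3 by blast
qed

lemma step_small: assumes "i < m" "g \<in> R" shows "\<bar>lev (As (Suc i)) g - lev (As i) g\<bar> \<le> 1"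
  using step_cases[OF assms] by (cases "\<beta> i = g"; cases "\<beta> i = - g") auto

lemma mono: assumes g: "g \<in> pos_roots R D" and j0: "j0 < m" shows "\<beta> j0 \<noteq> - g"
proof
  assume e: "\<beta> j0 = - g"
  have gR: "g \<in> R" using pos_R[OF g] .
  define w where "w i = lev (As i) g" for i
  have ws: "\<bar>w (Suc i) - w i\<bar> \<le> 1" if "i < m" for i unfolding w_def using step_small[OF that gR] .
  define K where "K = w (Suc j0)"
  have up: "w (Suc j0) = w j0 + 1" and wall0: "common_wall_in (As j0) (As (Suc j0)) g K"
    using step_cases[OF j0 gR] e unfolding K_def w_def by auto
  have down: "common_wall_in (As b) (As (Suc b)) g K" if b: "b < m" "w b = K" "w (Suc b) = K - 1" for b
  proof -
    have "\<beta> b = g"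
    proof (rule ccontr)
      assume ne: "\<beta> b \<noteq> g"
      show False
      proof (cases "\<beta> b = - g")
        case True thus False using step_cases[OF b(1) gR] b unfolding w_def by auto
      next
        case False thus False using step_cases[OF b(1) gR] b ne unfolding w_def by auto
      qed
    qed
    thus ?thesis using step_cases[OF b(1) gR] b unfolding w_def by auto
  qed
  obtain a b where ab: "a < b" "b < m" "common_wall_in (As a) (As (Suc a)) g K"
    "common_wall_in (As b) (As (Suc b)) g K"
  proof (cases "K \<ge> 1")
    case True
    have "w m < K" using levm[OF g] True unfolding w_def by simp
    then obtain b where "Suc j0 \<le> b" "b < m" "w b = K" "w (Suc b) = K - 1"
      using dIVT[of "Suc j0" m w K] ws j0 unfolding K_def by auto
    thus ?thesis using that[of j0 b] wall0 down by auto
  next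
    case False
    have "w 0 \<ge> K" using lev0[OF g] False unfolding w_def by simp
    moreover have "w j0 < K" using up unfolding K_def by simp
    ultimately obtain b where "b < j0" "w b = K" "w (Suc b) = K - 1"
      using dIVT[of 0 j0 w K] ws j0 by auto
    thus ?thesis using that[of b j0] wall0 down j0 by auto
  qed
  obtain Bs where Bs: "Bs 0 = As 0" "Bs (m - 2) = As m" "\<forall>i<m - 2. adjacent R (Bs i) (Bs (Suc i))"
    using shorten[OF R gR adj ab] by blast
  have "alcove_path R Bs (m - 2) (fund_alcove R D) ((\<lambda>\<mu>. \<mu> - lam) ` fund_alcove R D)"
    unfolding alcove_path_def using Bs A0 Am by simp
  hence "m \<le> m - 2" by (rule mn)
  thus False using ab by simp
qed

lemma lev_count: assumes g: "g \<in> pos_roots R D" and j: "j \<le> m"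
  shows "lev (As j) g = - int (card {i. i < j \<and> \<beta> i = g})"
  using j
proof (induction j)
  case 0 thus ?case using lev0[OF g] by simp
next
  case (Suc j)
  have jm: "j < m" using Suc.prems by simp
  have IH: "lev (As j) g = - int (card {i. i < j \<and> \<beta> i = g})" using Suc.IH jm by simp
  have nn: "\<beta> j \<noteq> - g" using mono[OF g jm] .
  show ?case
  proof (cases "\<beta> j = g")
    case True
    have "{i. i < Suc j \<and> \<beta> i = g} = insert j {i. i < j \<and> \<beta> i = g}" using True by auto
    hence "card {i. i < Suc j \<and> \<beta> i = g} = Suc (card {i. i < j \<and> \<beta> i = g})" by simp
    thus ?thesis using step_cases[OF jm pos_R[OF g]] True IH by simp
  next
    case False
    have "{i. i < Suc j \<and> \<beta> i = g} = {i. i < j \<and> \<beta> i = g}" using False less_Suc_eq by auto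
    thus ?thesis using step_cases[OF jm pos_R[OF g]] False nn IH by simp
  qed
qed

end




lemma perp_props:
  fixes a b :: "'a::euclidean_space"
  assumes b: "b \<noteq> 0"
  defines "u \<equiv> a - ((a \<bullet> b) / (b \<bullet> b)) *\<^sub>R b"
  shows "u \<bullet> b = 0" "u \<bullet> a = u \<bullet> u"
proof -
  show ub: "u \<bullet> b = 0" unfolding u_def using b by (simp add: inner_diff_left)
  have "a = u + ((a \<bullet> b) / (b \<bullet> b)) *\<^sub>R b" unfolding u_def by simp
  hence "u \<bullet> a = u \<bullet> (u + ((a \<bullet> b) / (b \<bullet> b)) *\<^sub>R b)" by (rule arg_cong)
  also have "\<dots> = u \<bullet> u" using ub by (simp add: inner_add_right inner_commute)
  finally show "u \<bullet> a = u \<bullet> u" .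
qed

lemma solve2:
  fixes a b :: "'a::euclidean_space"
  assumes ab: "\<forall>c. a \<noteq> c *\<^sub>R b" and ba: "\<forall>c. b \<noteq> c *\<^sub>R a"
  shows "\<exists>v. v \<bullet> a = s \<and> v \<bullet> b = t"
proof -
  have bnz: "b \<noteq> 0" using spec[OF ba, of 0] by simp
  have anz: "a \<noteq> 0" using spec[OF ab, of 0] by simp
  define u1 where "u1 = a - ((a \<bullet> b) / (b \<bullet> b)) *\<^sub>R b"
  define u2 where "u2 = b - ((b \<bullet> a) / (a \<bullet> a)) *\<^sub>R a"
  have u1: "u1 \<bullet> b = 0" "u1 \<bullet> a = u1 \<bullet> u1" unfolding u1_def by (rule perp_props[OF bnz])+
  have u2: "u2 \<bullet> a = 0" "u2 \<bullet> b = u2 \<bullet> u2" unfolding u2_def by (rule perp_props[OF anz])+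
  have u1nz: "u1 \<noteq> 0"
  proof
    assume "u1 = 0" hence "a = ((a \<bullet> b) / (b \<bullet> b)) *\<^sub>R b" unfolding u1_def by simp
    thus False using ab by blast
  qed
  have u2nz: "u2 \<noteq> 0"
  proof
    assume "u2 = 0" hence "b = ((b \<bullet> a) / (a \<bullet> a)) *\<^sub>R a" unfolding u2_def by simp
    thus False using ba by blast
  qed
  have p1: "u1 \<bullet> a \<noteq> 0" using u1 u1nz by simp
  have p2: "u2 \<bullet> b \<noteq> 0" using u2 u2nz by simp
  define v where "v = (s / (u1 \<bullet> a)) *\<^sub>R u1 + (t / (u2 \<bullet> b)) *\<^sub>R u2"
  have "v \<bullet> a = (s / (u1 \<bullet> a)) * (u1 \<bullet> a) + (t / (u2 \<bullet> b)) * (u2 \<bullet> a)"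
    unfolding v_def inner_add_left inner_scaleR_left ..
  also have "\<dots> = s" using p1 unfolding u2(1) by simp
  finally have "v \<bullet> a = s" .
  moreover have "v \<bullet> b = (s / (u1 \<bullet> a)) * (u1 \<bullet> b) + (t / (u2 \<bullet> b)) * (u2 \<bullet> b)"
    unfolding v_def inner_add_left inner_scaleR_left ..
  moreover have "\<dots> = t" using p2 unfolding u1(1) by simp
  ultimately show ?thesis by (intro exI[of _ v]) simp
qed

lemma cone_real:
  fixes F1 F2 ra rb rr :: real
  assumes s: "F1 + F2 > 0" and e: "F1 * (rr - ra) = F2 * (rb - rr)"
    and "ra \<le> rr" "rr \<le> rb" "ra < rb"
  shows "F1 \<ge> 0 \<and> F2 \<ge> 0"
proof (rule ccontr)
  assume "\<not> ?thesis"
  hence "F1 < 0 \<or> F2 < 0" by linarith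
  thus False
  proof
    assume F1: "F1 < 0"
    hence F2: "F2 > 0" using s by linarith
    have "F1 * (rr - ra) \<le> 0" using F1 assms(3) by (simp add: mult_nonpos_nonneg)
    moreover have "F2 * (rb - rr) \<ge> 0" using F2 assms(4) by simp
    ultimately have "F1 * (rr - ra) = 0" "F2 * (rb - rr) = 0" using e by linarith+
    hence "rr = ra" "rb = rr" using F1 F2 by auto
    thus False using assms(5) by simp
  next
    assume F2: "F2 < 0"
    hence F1: "F1 > 0" using s by linarith
    have "F1 * (rr - ra) \<ge> 0" using F1 assms(3) by simp
    moreover have "F2 * (rb - rr) \<le> 0" using F2 assms(4) by (simp add: mult_nonpos_nonneg)
    ultimately have "F1 * (rr - ra) = 0" "F2 * (rb - rr) = 0" using e by linarith+
    hence "rr = ra" "rb = rr" using F1 F2 by auto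
    thus False using assms(5) by simp
  qed
qed

locale rk2 =
  fixes Q :: "'a::euclidean_space set" and P :: "'a set" and n :: "'a \<Rightarrow> int" and x y :: 'a
  assumes RQ: "root_system Q" and dim2: "dim Q = 2" and PQ: "P \<subseteq> Q"
    and split: "\<And>\<rho>. \<rho> \<in> Q \<Longrightarrow> \<rho> \<in> P \<or> - \<rho> \<in> P"
    and bx: "\<And>e. e \<in> P \<Longrightarrow> of_int (n e) < x \<bullet> coroot e \<and> x \<bullet> coroot e < of_int (n e) + 1"
    and byy: "\<And>e. e \<in> P \<Longrightarrow> of_int (n e) - 1 < y \<bullet> coroot e \<and> y \<bullet> coroot e < of_int (n e)"
begin

definition "f \<rho> = \<rho> \<bullet> (x - y)"

lemma f_lin: "f (a *\<^sub>R u + b *\<^sub>R w) = a * f u + b * f w" "f (- u) = - f u" "f (u - w) = f u - f w"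
  unfolding f_def by (simp_all add: inner_add_left inner_diff_left)

lemma nzP: "e \<in> P \<Longrightarrow> e \<noteq> 0" using rs_nz[OF RQ] PQ by blast

lemma fpos: assumes e: "e \<in> P" shows "f e > 0"
proof -
  have "(x - y) \<bullet> coroot e > 0" using bx[OF e] byy[OF e] by (simp add: inner_diff_left)
  moreover have ee: "e \<bullet> e > 0" using nzP[OF e] by simp
  moreover have "(x - y) \<bullet> e = ((e \<bullet> e) / 2) * ((x - y) \<bullet> coroot e)" unfolding coroot_def using ee by simp
  ultimately have "(x - y) \<bullet> e > 0" by (metis half_gt_zero mult_pos_pos)
  thus ?thesis unfolding f_def by (simp add: inner_commute)
qed

lemma finP: "finite P" using RQ PQ unfolding root_system_def by (metis finite_subset)

lemma negP: assumes "e \<in> P" shows "- e \<notin> P"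
proof
  assume "- e \<in> P"
  hence "f (- e) > 0" by (rule fpos)
  thus False using fpos[OF assms] f_lin(2)[of e] by simp
qed

lemma ex_indep: "\<exists>a0\<in>P. \<exists>b0\<in>P. \<forall>c. b0 \<noteq> c *\<^sub>R a0"
proof (rule ccontr)
  assume H: "\<not> ?thesis"
  have "P \<noteq> {}"
  proof
    assume "P = {}" hence "Q = {}" using split by blast
    thus False using dim2 by simp
  qed
  then obtain a0 where a0: "a0 \<in> P" by blast
  have "Q \<subseteq> span {a0}"
  proof
    fix \<rho> assume r: "\<rho> \<in> Q"
    show "\<rho> \<in> span {a0}"
    proof (cases "\<rho> \<in> P")
      case True then obtain c where "\<rho> = c *\<^sub>R a0" using H a0 by blast
      thus ?thesis unfolding span_singleton by (simp add: image_iff)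
    next
      case False hence "- \<rho> \<in> P" using split[OF r] by blast
      then obtain c where "- \<rho> = c *\<^sub>R a0" using H a0 by blast
      hence "\<rho> = (- c) *\<^sub>R a0" by (metis minus_minus scaleR_minus_left)
      thus ?thesis unfolding span_singleton by (rule image_eqI[where x="-c"]) simp_all
    qed
  qed
  hence "dim Q \<le> card {a0}" by (rule dim_le_card) simp
  thus False using dim2 by simp
qed

end




lemma coeff_uniq:
  fixes s t :: "'a::real_vector"
  assumes np: "\<forall>c. s \<noteq> c *\<^sub>R t" and tnz: "t \<noteq> 0"
    and e: "a *\<^sub>R s + b *\<^sub>R t = a' *\<^sub>R s + b' *\<^sub>R t"
  shows "a = a' \<and> b = b'"
proof -
  have e2: "(a - a') *\<^sub>R s = (b' - b) *\<^sub>R t" using e by (simp add: algebra_simps)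
  have aa: "a = a'"
  proof (rule ccontr)
    assume "a \<noteq> a'"
    hence "s = (1 / (a - a')) *\<^sub>R ((a - a') *\<^sub>R s)" by simp
    also have "\<dots> = (1 / (a - a')) *\<^sub>R ((b' - b) *\<^sub>R t)" unfolding e2 ..
    also have "\<dots> = ((b' - b) / (a - a')) *\<^sub>R t" by simp
    finally have "s = ((b' - b) / (a - a')) *\<^sub>R t" .
    thus False using np by blast
  qed
  hence "(b' - b) *\<^sub>R t = 0" using e2 by simp
  hence "b' = b" using tnz by simp
  thus ?thesis using aa by simp
qed

context rk2
begin

lemma refl_step:
  assumes s: "s \<in> P" and t: "t \<in> P" and np: "\<forall>c. s \<noteq> c *\<^sub>R t"
    and cone: "\<And>\<rho>. \<rho> \<in> P \<Longrightarrow> \<exists>a b. 0 \<le> a \<and> 0 \<le> b \<and> \<rho> = a *\<^sub>R s + b *\<^sub>R t"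
    and e: "e \<in> P" and es: "e \<noteq> s" and pos: "e \<bullet> s > 0"
  shows "refl s e \<in> P \<and> f (refl s e) < f e \<and> (\<exists>k'::int. k' > 0 \<and>
           (\<forall>\<mu>. \<mu> \<bullet> coroot e = \<mu> \<bullet> coroot (refl s e) + of_int k' * (\<mu> \<bullet> coroot s)) \<and>
           n e = n (refl s e) + k' * n s)"
proof -
  have sQ: "s \<in> Q" and eQ: "e \<in> Q" using s e PQ by auto
  have snz: "s \<noteq> 0" and tnz: "t \<noteq> 0" and enz: "e \<noteq> 0" using nzP s t e by auto
  obtain a b where ab: "0 \<le> a" "0 \<le> b" "e = a *\<^sub>R s + b *\<^sub>R t" using cone[OF e] by blast
  have bpos: "b > 0"
  proof (rule ccontr)
    assume "\<not> b > 0" hence "b = 0" using ab by simp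
    hence "a *\<^sub>R s \<in> Q" using ab eQ by simp
    hence "a = 1 \<or> a = -1" by (rule rs_par[OF RQ sQ])
    hence "a = 1" using ab by auto
    thus False using es ab \<open>b = 0\<close> by simp
  qed
  obtain k where k: "e \<bullet> coroot s = of_int k" using rs_int[OF RQ sQ eQ] by (auto elim: Ints_cases)
  have kpos: "k > 0"
  proof -
    have "e \<bullet> coroot s = (2 / (s \<bullet> s)) * (e \<bullet> s)" unfolding coroot_def by simp
    moreover have "s \<bullet> s > 0" using snz by simp
    ultimately have "e \<bullet> coroot s > 0" using pos by simp
    thus ?thesis using k by simp
  qed
  define \<rho> where "\<rho> = refl s e"
  have \<rho>e: "\<rho> = e - of_int k *\<^sub>R s" unfolding \<rho>_def refl_def k ..
  have \<rho>Q: "\<rho> \<in> Q" unfolding \<rho>_def by (rule rs_refl[OF RQ sQ eQ])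
  have \<rho>P: "\<rho> \<in> P"
  proof (rule ccontr)
    assume "\<rho> \<notin> P" hence "- \<rho> \<in> P" using split[OF \<rho>Q] by blast
    then obtain a' b' where ab': "0 \<le> b'" "- \<rho> = a' *\<^sub>R s + b' *\<^sub>R t" using cone by blast
    have "- \<rho> = (of_int k - a) *\<^sub>R s + (- b) *\<^sub>R t" unfolding \<rho>e ab(3) by (simp add: algebra_simps)
    hence "(of_int k - a) *\<^sub>R s + (- b) *\<^sub>R t = a' *\<^sub>R s + b' *\<^sub>R t" using ab' by simp
    hence "- b = b'" using coeff_uniq[OF np tnz] by blast
    thus False using ab' bpos by simp
  qed
  have fless: "f \<rho> < f e"
  proof -
    have "f \<rho> = f e - of_int k * f s" unfolding \<rho>e f_def by (simp add: inner_diff_left)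
    moreover have "of_int k * f s > 0" using kpos fpos[OF s] by simp
    ultimately show ?thesis by simp
  qed
  obtain k' where k': "s \<bullet> coroot e = of_int k'" using rs_int[OF RQ eQ sQ] by (auto elim: Ints_cases)
  have k'pos: "k' > 0"
  proof -
    have "s \<bullet> coroot e = (2 / (e \<bullet> e)) * (e \<bullet> s)" unfolding coroot_def by (simp add: inner_commute)
    moreover have "e \<bullet> e > 0" using enz by simp
    ultimately have "s \<bullet> coroot e > 0" using pos by simp
    thus ?thesis using k' by simp
  qed
  have rel: "\<mu> \<bullet> coroot e = \<mu> \<bullet> coroot \<rho> + of_int k' * (\<mu> \<bullet> coroot s)" for \<mu>
    using sref_coord0[OF snz enz, of \<mu>] unfolding \<rho>_def k' by (simp add: mult.commute)
  have xs: "of_int k' * of_int (n s) < of_int k' * (x \<bullet> coroot s)" using bx[OF s] k'pos by simp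
  have ys: "of_int k' * (y \<bullet> coroot s) < of_int k' * of_int (n s)" using byy[OF s] k'pos by simp
  have "of_int (n \<rho> + k' * n s) < x \<bullet> coroot e" using rel[of x] bx[OF \<rho>P] xs by simp
  hence "of_int (n \<rho> + k' * n s) < (of_int (n e + 1) :: real)" using bx[OF e] by simp
  hence up: "n \<rho> + k' * n s \<le> n e" by (simp only: of_int_less_iff)
  have "y \<bullet> coroot e < of_int (n \<rho> + k' * n s)" using rel[of y] byy[OF \<rho>P] ys by simp
  hence "(of_int (n e - 1) :: real) < of_int (n \<rho> + k' * n s)" using byy[OF e] by simp
  hence lo: "n e - 1 < n \<rho> + k' * n s" by (simp only: of_int_less_iff)
  have "n e = n \<rho> + k' * n s" using up lo by simp
  thus ?thesis using \<rho>P fless rel k'pos unfolding \<rho>_def by blast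
qed

end




context rk2
begin

lemma concurrent: "\<exists>v. \<forall>e\<in>P. v \<bullet> coroot e = of_int (n e)"
proof -
  obtain a0 b0 where a0: "a0 \<in> P" and b0: "b0 \<in> P" and np0: "\<forall>c. b0 \<noteq> c *\<^sub>R a0"
    using ex_indep by blast
  have a0nz: "a0 \<noteq> 0" using nzP[OF a0] .
  define z where "z = b0 - ((b0 \<bullet> a0) / (a0 \<bullet> a0)) *\<^sub>R a0"
  have za: "z \<bullet> a0 = 0" and zb: "z \<bullet> b0 = z \<bullet> z" unfolding z_def by (rule perp_props[OF a0nz])+
  have znz: "z \<noteq> 0"
  proof
    assume "z = 0" hence "b0 = ((b0 \<bullet> a0) / (a0 \<bullet> a0)) *\<^sub>R a0" unfolding z_def by simp
    thus False using np0 by blast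
  qed
  define r where "r \<rho> = (\<rho> \<bullet> z) / f \<rho>" for \<rho>
  have ra0: "r a0 = 0" unfolding r_def using za by (simp add: inner_commute)
  have rb0: "r b0 > 0" unfolding r_def using zb znz fpos[OF b0] by (simp add: inner_commute)
  have rscale: "r (c *\<^sub>R \<rho>) = r \<rho>" if "c \<noteq> 0" for c \<rho>
    unfolding r_def f_def using that by simp
  have fin: "finite (r ` P)" using finP by simp
  have ne: "r ` P \<noteq> {}" using a0 by blast
  obtain al where al: "al \<in> P" "r al = Min (r ` P)" using Min_in[OF fin ne] by auto
  obtain be where be: "be \<in> P" "r be = Max (r ` P)" using Max_in[OF fin ne] by auto
  have almin: "r al \<le> r \<rho>" if "\<rho> \<in> P" for \<rho> using al Min_le[OF fin] that by simp
  have bemax: "r \<rho> \<le> r be" if "\<rho> \<in> P" for \<rho> using be Max_ge[OF fin] that by simp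
  have rlt: "r al < r be" using almin[OF a0] bemax[OF b0] ra0 rb0 by simp
  have alnz: "al \<noteq> 0" and benz: "be \<noteq> 0" using nzP al be by auto
  have np1: "\<forall>c. al \<noteq> c *\<^sub>R be"
  proof (intro allI notI)
    fix c assume c: "al = c *\<^sub>R be"
    hence "c \<noteq> 0" using alnz by auto
    hence "r al = r be" using c rscale by simp
    thus False using rlt by simp
  qed
  have np2: "\<forall>c. be \<noteq> c *\<^sub>R al"
  proof (intro allI notI)
    fix c assume c: "be = c *\<^sub>R al"
    hence "c \<noteq> 0" using benz by auto
    hence "r al = r be" using c rscale by simp
    thus False using rlt by simp
  qed
  have abne: "al \<noteq> be" using rlt by auto
  have ind: "independent {al, be}"
  proof -
    have "al \<notin> span {be}" using np1 unfolding span_singleton by auto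
    moreover have "independent {be}" using benz by (simp add: independent_insert)
    ultimately show ?thesis using abne by (simp add: independent_insert)
  qed
  have "Q \<subseteq> span {al, be}"
  proof (rule card_ge_dim_independent[OF _ ind])
    show "{al, be} \<subseteq> Q" using al be PQ by auto
    show "dim Q \<le> card {al, be}" using dim2 abne by simp
  qed
  hence comb: "\<exists>a b. \<rho> = a *\<^sub>R al + b *\<^sub>R be" if "\<rho> \<in> Q" for \<rho>
  proof -
    have "\<rho> \<in> span (insert al {be})" using that \<open>Q \<subseteq> span {al, be}\<close> by auto
    then obtain a where "\<rho> - a *\<^sub>R al \<in> span {be}" unfolding span_insert by blast
    then obtain b where "\<rho> - a *\<^sub>R al = b *\<^sub>R be" unfolding span_singleton by blast
    hence "\<rho> = a *\<^sub>R al + b *\<^sub>R be" by (simp add: algebra_simps)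
    thus ?thesis by blast
  qed
  have cone: "\<exists>a b. 0 \<le> a \<and> 0 \<le> b \<and> \<rho> = a *\<^sub>R al + b *\<^sub>R be" if rP: "\<rho> \<in> P" for \<rho>
  proof -
    obtain a b where ab: "\<rho> = a *\<^sub>R al + b *\<^sub>R be" using comb[of \<rho>] rP PQ by blast
    have fa: "f al > 0" and fb: "f be > 0" and fr: "f \<rho> > 0" using fpos al be rP by auto
    define F1 where "F1 = a * f al"
    define F2 where "F2 = b * f be"
    have sum: "f \<rho> = F1 + F2" unfolding F1_def F2_def ab f_lin(1) ..
    have za': "al \<bullet> z = r al * f al" unfolding r_def using fa by simp
    have zb': "be \<bullet> z = r be * f be" unfolding r_def using fb by simp
    have zr: "\<rho> \<bullet> z = r \<rho> * f \<rho>" unfolding r_def using fr by simp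
    have "\<rho> \<bullet> z = a * (al \<bullet> z) + b * (be \<bullet> z)" unfolding ab by (simp add: inner_add_left)
    hence "r \<rho> * (F1 + F2) = r al * F1 + r be * F2" unfolding zr za' zb' sum F1_def F2_def
      by (simp add: algebra_simps)
    hence eq: "F1 * (r \<rho> - r al) = F2 * (r be - r \<rho>)" by (simp add: algebra_simps)
    have "F1 \<ge> 0 \<and> F2 \<ge> 0"
      by (rule cone_real[OF _ eq almin[OF rP] bemax[OF rP] rlt]) (use sum fr in simp)
    hence "a \<ge> 0" "b \<ge> 0" unfolding F1_def F2_def using fa fb by (simp_all add: zero_le_mult_iff)
    thus ?thesis using ab by blast
  qed
  have cone': "\<exists>a b. 0 \<le> a \<and> 0 \<le> b \<and> \<rho> = a *\<^sub>R be + b *\<^sub>R al" if rP: "\<rho> \<in> P" for \<rho>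
    using cone[OF rP] by (metis add.commute)
  obtain v where v: "v \<bullet> al = of_int (n al) * (al \<bullet> al) / 2" "v \<bullet> be = of_int (n be) * (be \<bullet> be) / 2"
    using solve2[OF np1 np2] by blast
  have val: "v \<bullet> coroot al = of_int (n al)" unfolding coroot_def inner_scaleR_right v(1) using alnz by simp
  have vbe: "v \<bullet> coroot be = of_int (n be)" unfolding coroot_def inner_scaleR_right v(2) using benz by simp
  have main: "\<forall>e. e \<in> P \<longrightarrow> card {\<tau>\<in>P. f \<tau> < f e} = N \<longrightarrow> v \<bullet> coroot e = of_int (n e)" for N
  proof (induction N rule: less_induct)
    case (less N)
    show ?case
    proof (intro allI impI)
      fix e assume e: "e \<in> P" and cN: "card {\<tau>\<in>P. f \<tau> < f e} = N"
      have IH: "v \<bullet> coroot \<rho> = of_int (n \<rho>)" if "\<rho> \<in> P" "f \<rho> < f e" for \<rho>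
      proof -
        have "{\<tau>\<in>P. f \<tau> < f \<rho>} \<subset> {\<tau>\<in>P. f \<tau> < f e}" using that by auto
        hence "card {\<tau>\<in>P. f \<tau> < f \<rho>} < N" unfolding cN[symmetric]
          by (rule psubset_card_mono[rotated]) (use finP in simp)
        thus ?thesis using less.IH that(1) by blast
      qed
      show "v \<bullet> coroot e = of_int (n e)"
      proof (cases "e = al \<or> e = be")
        case True thus ?thesis using val vbe by auto
      next
        case False
        obtain a b where ab: "0 \<le> a" "0 \<le> b" "e = a *\<^sub>R al + b *\<^sub>R be" using cone[OF e] by blast
        have "e \<bullet> e > 0" using nzP[OF e] by simp
        moreover have "e \<bullet> e = a * (e \<bullet> al) + b * (e \<bullet> be)"
          by (subst (2) ab(3)) (simp add: inner_add_right)
        ultimately have "a * (e \<bullet> al) > 0 \<or> b * (e \<bullet> be) > 0" by linarith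
        hence "e \<bullet> al > 0 \<or> e \<bullet> be > 0" using ab by (auto simp: zero_less_mult_iff)
        then obtain s where s: "s \<in> P" "e \<bullet> s > 0" "e \<noteq> s" "v \<bullet> coroot s = of_int (n s)"
          and st: "refl s e \<in> P \<and> f (refl s e) < f e \<and> (\<exists>k'::int. k' > 0 \<and>
           (\<forall>\<mu>. \<mu> \<bullet> coroot e = \<mu> \<bullet> coroot (refl s e) + of_int k' * (\<mu> \<bullet> coroot s)) \<and>
           n e = n (refl s e) + k' * n s)"
        proof
          assume "e \<bullet> al > 0"
          thus thesis using that[OF al(1)] refl_step[OF al(1) be(1) np1 cone e] False val by blast
        next
          assume "e \<bullet> be > 0"
          thus thesis using that[OF be(1)] refl_step[OF be(1) al(1) np2 cone' e] False vbe by blast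
        qed
        then obtain k' where k': "\<forall>\<mu>. \<mu> \<bullet> coroot e = \<mu> \<bullet> coroot (refl s e) + of_int k' * (\<mu> \<bullet> coroot s)"
          "n e = n (refl s e) + k' * n s" by blast
        have "v \<bullet> coroot (refl s e) = of_int (n (refl s e))" using IH st by blast
        thus ?thesis using k' s(4) by simp
      qed
    qed
  qed
  show ?thesis using main by blast
qed

end





lemma pos_or_neg: assumes R: "root_system R" and sr: "simple_roots R D" and r: "\<rho> \<in> R"
  shows "\<rho> \<in> pos_roots R D \<or> - \<rho> \<in> pos_roots R D"
proof -
  obtain c where c: "\<forall>\<delta>\<in>D. c \<delta> \<in> \<int>" "(\<forall>\<delta>\<in>D. c \<delta> \<ge> 0) \<or> (\<forall>\<delta>\<in>D. c \<delta> \<le> 0)"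
    "\<rho> = (\<Sum>\<delta>\<in>D. c \<delta> *\<^sub>R \<delta>)"
    using sr r unfolding simple_roots_def by blast
  show ?thesis
  proof (cases "\<forall>\<delta>\<in>D. c \<delta> \<ge> 0")
    case True thus ?thesis using c r unfolding pos_roots_def by blast
  next
    case False
    hence neg: "\<forall>\<delta>\<in>D. c \<delta> \<le> 0" using c(2) by blast
    have "- \<rho> = (\<Sum>\<delta>\<in>D. (- c \<delta>) *\<^sub>R \<delta>)" unfolding c(3) by (simp add: sum_negf)
    moreover have "\<forall>\<delta>\<in>D. - c \<delta> \<in> \<int> \<and> - c \<delta> \<ge> 0" using c(1) neg by auto
    moreover have "- \<rho> \<in> R" using rs_neg[OF R r] .
    ultimately have "- \<rho> \<in> pos_roots R D" unfolding pos_roots_def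
      by (intro CollectI conjI exI[of _ "\<lambda>\<delta>. - c \<delta>"]) auto
    thus ?thesis by blast
  qed
qed

lemma aff_dim_two_hyp:
  fixes a b v :: "'a::euclidean_space"
  assumes np: "\<forall>c. b \<noteq> c *\<^sub>R a" and anz: "a \<noteq> 0"
    and va: "v \<bullet> coroot a = ka" and vb: "v \<bullet> coroot b = kb"
  shows "aff_dim ({\<mu>. \<mu> \<bullet> coroot a = ka} \<inter> {\<mu>. \<mu> \<bullet> coroot b = kb}) = int DIM('a) - 2"
proof -
  have bnz: "b \<noteq> 0" using spec[OF np, of 0] by simp
  have e1: "{\<mu>. \<mu> \<bullet> coroot a = ka} = UNIV \<inter> {\<mu>. coroot a \<bullet> \<mu> = ka}" by (auto simp: inner_commute)
  have e2: "{\<mu>. \<mu> \<bullet> coroot b = kb} = {\<mu>. coroot b \<bullet> \<mu> = kb}" by (auto simp: inner_commute)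
  have ca: "coroot a \<noteq> 0" using anz unfolding coroot_def by simp
  have d1: "aff_dim (UNIV \<inter> {\<mu>. coroot a \<bullet> \<mu> = ka}) = int DIM('a) - 1"
  proof -
    have "UNIV \<inter> {\<mu>. coroot a \<bullet> \<mu> = ka} \<noteq> {}" using va by (auto simp: inner_commute)
    moreover have "\<not> UNIV \<subseteq> {\<mu>. coroot a \<bullet> \<mu> = ka}"
    proof
      assume "UNIV \<subseteq> {\<mu>. coroot a \<bullet> \<mu> = ka}"
      hence "coroot a \<bullet> (v + coroot a) = ka" by blast
      hence "coroot a \<bullet> coroot a = 0" using va by (simp add: inner_add_right inner_commute)
      thus False using ca by simp
    qed
    ultimately show ?thesis using aff_dim_affine_Int_hyperplane[OF affine_UNIV, of "coroot a" ka]
      by (simp add: aff_dim_UNIV)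
  qed
  define u where "u = b - ((b \<bullet> a) / (a \<bullet> a)) *\<^sub>R a"
  have ua: "u \<bullet> a = 0" and ub: "u \<bullet> b = u \<bullet> u" unfolding u_def by (rule perp_props[OF anz])+
  have unz: "u \<noteq> 0"
  proof
    assume "u = 0" hence "b = ((b \<bullet> a) / (a \<bullet> a)) *\<^sub>R a" unfolding u_def by simp
    thus False using np by blast
  qed
  let ?H = "UNIV \<inter> {\<mu>. coroot a \<bullet> \<mu> = ka}"
  have "aff_dim (?H \<inter> {\<mu>. coroot b \<bullet> \<mu> = kb}) = aff_dim ?H - 1"
  proof -
    have aH: "affine ?H" by (simp add: affine_hyperplane)
    have "?H \<inter> {\<mu>. coroot b \<bullet> \<mu> = kb} \<noteq> {}" using va vb by (auto simp: inner_commute)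
    moreover have "\<not> ?H \<subseteq> {\<mu>. coroot b \<bullet> \<mu> = kb}"
    proof
      assume H: "?H \<subseteq> {\<mu>. coroot b \<bullet> \<mu> = kb}"
      have "coroot a \<bullet> (v + u) = ka" using va ua unfolding coroot_def
        by (simp add: inner_add_right inner_commute)
      hence "coroot b \<bullet> (v + u) = kb" using H by blast
      hence "coroot b \<bullet> u = 0" using vb by (simp add: inner_add_right inner_commute)
      hence "u \<bullet> b = 0" using bnz unfolding coroot_def by (simp add: inner_commute)
      thus False using ub unz by simp
    qed
    ultimately show ?thesis using aff_dim_affine_Int_hyperplane[OF aH, of "coroot b" kb] by simp
  qed
  thus ?thesis unfolding e1 e2 d1 by simp
qed

theorem lemma3p5:
  fixes \<Phi> \<Delta> \<Phi>' :: "'a::euclidean_space set"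
    and lam :: 'a and \<beta> :: "nat \<Rightarrow> 'a" and m t q :: nat
  assumes "root_system \<Phi>" and "span \<Phi> = UNIV" and "irreducible_rs \<Phi>"
    and "simple_roots \<Phi> \<Delta>"
    and "dominant \<Phi> \<Delta> lam"
    and "lambda_chain \<Phi> \<Delta> lam \<beta> m"
    and "t + q \<le> m"
    and "\<Phi>' \<subseteq> \<Phi>" and "root_system \<Phi>'" and "rank \<Phi>' = 2"
    and "inj_on \<beta> {t..<t+q}"
    and "\<beta> ` {t..<t+q} = \<Phi>' \<inter> pos_roots \<Phi> \<Delta>"
  shows "aff_dim (\<Inter>i\<in>{t..<t+q}. hyp (\<beta> i) (- int (lcount \<beta> i))) = int DIM('a) - 2
     \<and> (\<Inter>i\<in>{t..<t+q}. hyp (\<beta> i) (- int (lcount \<beta> i)))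
         = hyp (\<beta> t) (- int (lcount \<beta> t)) \<inter> hyp (\<beta> (t+q-1)) (- int (lcount \<beta> (t+q-1)))"
proof -
  note R = assms(1) and sr = assms(4) and dom = assms(5) and lc = assms(6) and tqm = assms(7)
    and QR = assms(8) and RQ = assms(9) and rk = assms(10) and inj = assms(11) and img = assms(12)
  define W where "W = {t..<t+q}"
  define P where "P = \<Phi>' \<inter> pos_roots \<Phi> \<Delta>"
  have img': "\<beta> ` W = P" unfolding W_def P_def using img .
  have dim2: "dim \<Phi>' = 2" using rk unfolding rank_def dim_span .
  have splitQ: "\<rho> \<in> P \<or> - \<rho> \<in> P" if "\<rho> \<in> \<Phi>'" for \<rho>
    using pos_or_neg[OF R sr, of \<rho>] that QR rs_neg[OF RQ that] unfolding P_def by blast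
  have PQ: "P \<subseteq> \<Phi>'" unfolding P_def by blast
  have Qne: "\<Phi>' \<noteq> {}" using dim2 by auto
  then obtain \<rho>0 where "\<rho>0 \<in> \<Phi>'" by blast
  hence "P \<noteq> {}" using splitQ by blast
  hence qpos: "q > 0" using img' unfolding W_def by auto
  hence mpos: "m > 0" using tqm by simp
  obtain As where As0: "As 0 = fund_alcove \<Phi> \<Delta>" and Asm: "As m = (\<lambda>\<mu>. \<mu> - lam) ` fund_alcove \<Phi> \<Delta>"
    and st: "\<forall>i<m. alcove_step \<Phi> (As i) (- \<beta> i) (As (Suc i))"
    and mn: "\<forall>Bs m'. alcove_path \<Phi> Bs m' (fund_alcove \<Phi> \<Delta>) ((\<lambda>\<mu>. \<mu> - lam) ` fund_alcove \<Phi> \<Delta>) \<longrightarrow> m \<le> m'"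
    using lc unfolding lambda_chain_def Let_def by blast
  interpret L: lchain \<Phi> \<Delta> lam \<beta> m As
    using R sr dom As0 Asm st mn mpos by unfold_locales blast+
  obtain x where x: "x \<in> As t" using alc_ne[OF L.alc[of t]] tqm by auto
  obtain y where y: "y \<in> As (t + q)" using alc_ne[OF L.alc[of "t+q"]] tqm by auto
  have posP: "e \<in> pos_roots \<Phi> \<Delta>" if "e \<in> P" for e using that unfolding P_def by blast
  have lcnt: "lev (As t) (\<beta> i) = - int (lcount \<beta> i) \<and> lev (As (t + q)) (\<beta> i) = - int (lcount \<beta> i) - 1"
    if i: "i \<in> W" for i
  proof -
    have bP: "\<beta> i \<in> P" using img' i by blast
    have s1: "{j. j < t \<and> \<beta> j = \<beta> i} = {j. j < i \<and> \<beta> j = \<beta> i}"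
    proof (intro equalityI subsetI)
      fix j assume "j \<in> {j. j < t \<and> \<beta> j = \<beta> i}" thus "j \<in> {j. j < i \<and> \<beta> j = \<beta> i}" using i unfolding W_def by auto
    next
      fix j assume j: "j \<in> {j. j < i \<and> \<beta> j = \<beta> i}"
      show "j \<in> {j. j < t \<and> \<beta> j = \<beta> i}"
      proof (rule ccontr)
        assume "j \<notin> {j. j < t \<and> \<beta> j = \<beta> i}"
        hence "j \<in> W" using j i unfolding W_def by auto
        hence "j = i" using inj j i unfolding W_def inj_on_def by blast
        thus False using j by simp
      qed
    qed
    have s2: "{j. j < t + q \<and> \<beta> j = \<beta> i} = insert i {j. j < i \<and> \<beta> j = \<beta> i}"
    proof (intro equalityI subsetI)
      fix j assume j: "j \<in> {j. j < t + q \<and> \<beta> j = \<beta> i}"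
      show "j \<in> insert i {j. j < i \<and> \<beta> j = \<beta> i}"
      proof (cases "j < t")
        case True thus ?thesis using j s1 by blast
      next
        case False
        hence "j \<in> W" using j unfolding W_def by auto
        hence "j = i" using inj j i unfolding W_def inj_on_def by blast
        thus ?thesis by simp
      qed
    next
      fix j assume "j \<in> insert i {j. j < i \<and> \<beta> j = \<beta> i}"
      thus "j \<in> {j. j < t + q \<and> \<beta> j = \<beta> i}" using i unfolding W_def by auto
    qed
    have "card {j. j < t + q \<and> \<beta> j = \<beta> i} = Suc (lcount \<beta> i)"
      unfolding s2 lcount_def by simp
    moreover have "lev (As t) (\<beta> i) = - int (card {j. j < t \<and> \<beta> j = \<beta> i})"
      using L.lev_count[OF posP[OF bP], of t] tqm by simp
    moreover have "lev (As (t + q)) (\<beta> i) = - int (card {j. j < t + q \<and> \<beta> j = \<beta> i})"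
      using L.lev_count[OF posP[OF bP], of "t + q"] tqm by simp
    ultimately show ?thesis unfolding s1 lcount_def by simp
  qed
  define n where "n e = lev (As t) e" for e
  interpret K: rk2 \<Phi>' P n x y
  proof (unfold_locales)
    show "root_system \<Phi>'" by (rule RQ)
    show "dim \<Phi>' = 2" by (rule dim2)
    show "P \<subseteq> \<Phi>'" by (rule PQ)
    show "\<And>\<rho>. \<rho> \<in> \<Phi>' \<Longrightarrow> \<rho> \<in> P \<or> - \<rho> \<in> P" by (rule splitQ)
    fix e assume e: "e \<in> P"
    have eR: "e \<in> \<Phi>" using e PQ QR by blast
    show "of_int (n e) < x \<bullet> coroot e \<and> x \<bullet> coroot e < of_int (n e) + 1"
      unfolding n_def using lev_bounds[OF L.alc[of t] eR x] tqm by simp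
    obtain i where i: "i \<in> W" "e = \<beta> i" using e img' by blast
    have "lev (As (t + q)) e = n e - 1" unfolding n_def using lcnt[OF i(1)] i(2) by simp
    thus "of_int (n e) - 1 < y \<bullet> coroot e \<and> y \<bullet> coroot e < of_int (n e)"
      using lev_bounds[OF L.alc[of "t+q"] eR y] tqm by simp
  qed
  obtain v where v: "\<forall>e\<in>P. v \<bullet> coroot e = of_int (n e)" using K.concurrent by blast
  define a where "a = \<beta> t"
  define b where "b = \<beta> (t + q - 1)"
  have tW: "t \<in> W" and lW: "t + q - 1 \<in> W" using qpos unfolding W_def by auto
  have aP: "a \<in> P" and bP: "b \<in> P" unfolding a_def b_def using img' tW lW by auto
  have X: "(\<Inter>i\<in>W. hyp (\<beta> i) (- int (lcount \<beta> i))) = {\<mu>. \<forall>e\<in>P. \<mu> \<bullet> coroot e = of_int (n e)}"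
  proof -
    have hh: "hyp (\<beta> i) (- int (lcount \<beta> i)) = {\<mu>. \<mu> \<bullet> coroot (\<beta> i) = of_int (n (\<beta> i))}" if "i \<in> W" for i
      unfolding hyp_def n_def using lcnt[OF that] by simp
    have "(\<Inter>i\<in>W. hyp (\<beta> i) (- int (lcount \<beta> i))) = (\<Inter>i\<in>W. {\<mu>. \<mu> \<bullet> coroot (\<beta> i) = of_int (n (\<beta> i))})"
      by (rule INF_cong[OF refl]) (rule hh)
    also have "\<dots> = {\<mu>. \<forall>e\<in>P. \<mu> \<bullet> coroot e = of_int (n e)}" unfolding img'[symmetric] by auto
    finally show ?thesis .
  qed
  have Ya: "hyp (\<beta> t) (- int (lcount \<beta> t)) = {\<mu>. \<mu> \<bullet> coroot a = of_int (n a)}"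
    unfolding hyp_def n_def a_def using lcnt[OF tW] by simp
  have Yb: "hyp (\<beta> (t+q-1)) (- int (lcount \<beta> (t+q-1))) = {\<mu>. \<mu> \<bullet> coroot b = of_int (n b)}"
    unfolding hyp_def n_def b_def using lcnt[OF lW] by simp
  have anz: "a \<noteq> 0" using K.nzP[OF aP] .
  have np: "\<forall>c. b \<noteq> c *\<^sub>R a"
  proof (intro allI notI)
    fix c assume c: "b = c *\<^sub>R a"
    have "a \<in> \<Phi>'" "b \<in> \<Phi>'" using aP bP PQ by auto
    hence "c = 1 \<or> c = -1" using rs_par[OF RQ] c by blast
    thus False
    proof
      assume "c = 1"
      hence "\<beta> t = \<beta> (t + q - 1)" using c unfolding a_def b_def by simp
      hence "t = t + q - 1" using inj tW lW unfolding W_def inj_on_def by blast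
      hence "q = 1" using qpos by simp
      hence "P = {a}" using img' unfolding W_def a_def by simp
      have "\<Phi>' \<subseteq> span {a}"
      proof
        fix \<rho> assume r: "\<rho> \<in> \<Phi>'"
        have "\<rho> = a \<or> - \<rho> = a" using splitQ[OF r] \<open>P = {a}\<close> by blast
        hence "\<rho> = 1 *\<^sub>R a \<or> \<rho> = (-1) *\<^sub>R a" by auto
        thus "\<rho> \<in> span {a}" unfolding span_singleton by blast
      qed
      hence "dim \<Phi>' \<le> card {a}" by (rule dim_le_card) simp
      thus False using dim2 by simp
    next
      assume "c = -1"
      hence "b = - a" using c by simp
      thus False using K.negP[OF aP] bP by simp
    qed
  qed
  have np': "\<forall>c. a \<noteq> c *\<^sub>R b"
  proof (intro allI notI)
    fix c assume c: "a = c *\<^sub>R b"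
    hence "c \<noteq> 0" using anz by auto
    hence "b = (1 / c) *\<^sub>R a" using c by simp
    thus False using np by blast
  qed
  have bnz: "b \<noteq> 0" using spec[OF np, of 0] by simp
  have ind: "independent {a, b}"
  proof -
    have "a \<notin> span {b}" using np' unfolding span_singleton by auto
    moreover have "independent {b}" using bnz by (simp add: independent_insert)
    moreover have "a \<noteq> b" using np[rule_format, of 1] by auto
    ultimately show ?thesis by (simp add: independent_insert)
  qed
  have Qspan: "\<Phi>' \<subseteq> span {a, b}"
  proof (rule card_ge_dim_independent[OF _ ind])
    show "{a, b} \<subseteq> \<Phi>'" using aP bP PQ by auto
    show "dim \<Phi>' \<le> card {a, b}" using dim2 np[rule_format, of 1] by auto
  qed
  have va: "v \<bullet> coroot a = of_int (n a)" and vb: "v \<bullet> coroot b = of_int (n b)" using v aP bP by auto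
  have eqXY: "{\<mu>. \<forall>e\<in>P. \<mu> \<bullet> coroot e = of_int (n e)} = {\<mu>. \<mu> \<bullet> coroot a = of_int (n a)} \<inter> {\<mu>. \<mu> \<bullet> coroot b = of_int (n b)}"
  proof (intro equalityI subsetI)
    fix \<mu> assume "\<mu> \<in> {\<mu>. \<forall>e\<in>P. \<mu> \<bullet> coroot e = of_int (n e)}"
    thus "\<mu> \<in> {\<mu>. \<mu> \<bullet> coroot a = of_int (n a)} \<inter> {\<mu>. \<mu> \<bullet> coroot b = of_int (n b)}" using aP bP by auto
  next
    fix \<mu> assume mu: "\<mu> \<in> {\<mu>. \<mu> \<bullet> coroot a = of_int (n a)} \<inter> {\<mu>. \<mu> \<bullet> coroot b = of_int (n b)}"
    have oa: "(\<mu> - v) \<bullet> a = 0"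
    proof -
      have "(\<mu> - v) \<bullet> coroot a = 0" using mu va by (simp add: inner_diff_left)
      thus ?thesis using anz unfolding coroot_def by simp
    qed
    have ob: "(\<mu> - v) \<bullet> b = 0"
    proof -
      have "(\<mu> - v) \<bullet> coroot b = 0" using mu vb by (simp add: inner_diff_left)
      thus ?thesis using bnz unfolding coroot_def by simp
    qed
    show "\<mu> \<in> {\<mu>. \<forall>e\<in>P. \<mu> \<bullet> coroot e = of_int (n e)}"
    proof (intro CollectI ballI)
      fix e assume e: "e \<in> P"
      have "e \<in> span {a, b}" using Qspan PQ e by blast
      hence "orthogonal (\<mu> - v) e"
        by (rule orthogonal_to_span) (use oa ob in \<open>auto simp: orthogonal_def\<close>)
      hence "(\<mu> - v) \<bullet> e = 0" unfolding orthogonal_def .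
      hence "(\<mu> - v) \<bullet> coroot e = 0" unfolding coroot_def by simp
      thus "\<mu> \<bullet> coroot e = of_int (n e)" using v e by (simp add: inner_diff_left)
    qed
  qed
  have AD: "aff_dim ({\<mu>. \<mu> \<bullet> coroot a = of_int (n a)} \<inter> {\<mu>. \<mu> \<bullet> coroot b = of_int (n b)}) = int DIM('a) - 2"
    by (rule aff_dim_two_hyp[OF np anz va vb])
  show ?thesis unfolding W_def[symmetric] X Ya Yb eqXY using AD by simp
qed


end
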